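(* Let $\mu$ and $\nu$ be nice functions on $\mathbb{R}$, let $\mathcal{P}^n$ be a subfamily of the sub-spherical family $\mathcal{P}^n_\mu$, and let $\mathcal{P}^m$ be a completely monotone subfamily of the sub-spherical family $\mathcal{P}^m_\nu$. Let $A$ be an $r\times n$ matrix, $B$ an $r\times m$ matrix and $\Theta$ a positive definite $r\times r$ matrix such that $$\Theta^2\succeq AA^T,\quad \Theta^2\succeq BB^T,\quad AA^T+BB^T\succ 0.$$ Consider random vectors $\xi=\Theta^{-1}[A\eta+B\zeta]$, where $\eta\sim p\in\mathcal{P}^n$ and $\zeta\sim q\in\mathcal{P}^m$ are independent, and let $\gamma(s)=\int_{-\infty}^{\infty}\mu(s-r)\nu(r)\,dr$. Then: (i) $\gamma$ is nice, and for every $e\in\mathbb{R}^r$ with $\|e\|_2=1$ and every $\delta\ge0$ one has $\mathrm{Prob}\{e^T\xi\ge\delta\}\le\int_\delta^\infty\gamma(s)\,ds$. Moreover, the scalar random variable $e^T\xi$ possesses a symmetric density, so that the distribution of $\xi$ belongs to the sub-spherical family $\mathcal{P}^r_\gamma$. (ii) If, in addition, $\mathcal{P}^n$ is completely monotone, then the family of distributions of the random vectors $\xi$ induced by $\eta\sim p\in\mathcal{P}^n$ and $\zeta\sim q\in\mathcal{P}^m$ is a completely monotone subfamily of $\mathcal{P}^r_\gamma$.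
   Context: For an even probability density $\gamma$ on $\mathbb{R}$ positive in a neighbourhood of $0$, the sub-spherical family $\mathcal{P}^n_\gamma$ is the set of all even probability densities $p$ on $\mathbb{R}^n$ such that for every unit vector $e$ and $\delta\ge0$, $\int_{\{e^T\xi\ge\delta\}}p(\xi)d\xi\le\int_\delta^\infty\gamma(s)ds$. A function $\gamma$ on $\mathbb{R}$ is called nice if it is an even probability density which is continuous and nonincreasing on $[0,\infty)$. A subfamily $\mathcal{P}\subset\mathcal{P}^n_\gamma$ is completely monotone if $\gamma$ is nice and for every $p\in\mathcal{P}$ and every unit vector $e\in\mathbb{R}^n$ the random variable $e^T\xi$, $\xi\sim p$, has a probability density which is nice. $\succeq,\succ$ denote the positive semidefinite / definite orders. *)

theory Defs
  imports "HOL-Analysis.Analysis"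
begin

definition prob_density :: "('a::euclidean_space \<Rightarrow> real) \<Rightarrow> bool" where
  "prob_density p \<longleftrightarrow> p \<in> borel_measurable lborel \<and> (\<forall>x. 0 \<le> p x)
      \<and> integrable lborel p \<and> integral\<^sup>L lborel p = 1"

definition even_prob_density :: "('a::euclidean_space \<Rightarrow> real) \<Rightarrow> bool" where
  "even_prob_density p \<longleftrightarrow> prob_density p \<and> (\<forall>x. p (- x) = p x)"

definition nice :: "(real \<Rightarrow> real) \<Rightarrow> bool" where
  "nice g \<longleftrightarrow> even_prob_density g \<and> continuous_on {0..} g
      \<and> (\<forall>s t. 0 \<le> s \<longrightarrow> s \<le> t \<longrightarrow> g t \<le> g s)"

definition dens_measure :: "('a::euclidean_space \<Rightarrow> real) \<Rightarrow> 'a measure" where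
  "dens_measure p = density lborel (\<lambda>x. ennreal (p x))"

definition tail :: "(real \<Rightarrow> real) \<Rightarrow> real \<Rightarrow> real" where
  "tail g \<delta> = (LINT s:{\<delta>..}|lborel. g s)"

definition subspherical :: "(real \<Rightarrow> real) \<Rightarrow> (real^'n \<Rightarrow> real) set" where
  "subspherical g = {p. even_prob_density p \<and>
      (\<forall>e \<delta>. norm e = 1 \<longrightarrow> 0 \<le> \<delta> \<longrightarrow>
          measure (dens_measure p) {x. e \<bullet> x \<ge> \<delta>} \<le> tail g \<delta>)}"

definition completely_monotone :: "(real \<Rightarrow> real) \<Rightarrow> (real^'n \<Rightarrow> real) set \<Rightarrow> bool" where
  "completely_monotone g P \<longleftrightarrow> nice g \<and> P \<subseteq> subspherical g \<and>
     (\<forall>p\<in>P. \<forall>e. norm e = 1 \<longrightarrow>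
        (\<exists>f. nice f \<and> distr (dens_measure p) lborel (\<lambda>x. e \<bullet> x) = dens_measure f))"

definition psd_mat :: "real^'r^'r \<Rightarrow> bool" where
  "psd_mat M \<longleftrightarrow> transpose M = M \<and> (\<forall>x. 0 \<le> x \<bullet> (M *v x))"

definition pd_mat :: "real^'r^'r \<Rightarrow> bool" where
  "pd_mat M \<longleftrightarrow> transpose M = M \<and> (\<forall>x. x \<noteq> 0 \<longrightarrow> 0 < x \<bullet> (M *v x))"

definition law_xi :: "real^'r^'r \<Rightarrow> real^'n^'r \<Rightarrow> real^'m^'r
     \<Rightarrow> (real^'n \<Rightarrow> real) \<Rightarrow> (real^'m \<Rightarrow> real) \<Rightarrow> (real^'r) measure" where
  "law_xi \<Theta> A B p q = distr (dens_measure p \<Otimes>\<^sub>M dens_measure q) lborel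
      (\<lambda>(\<eta>, \<zeta>). matrix_inv \<Theta> *v (A *v \<eta> + B *v \<zeta>))"

end

theory Submission
  imports Defs "HOL-Probability.Probability"
begin


lemma nice_abs_mono:
  assumes "nice f" "\<bar>x\<bar> \<le> \<bar>y\<bar>"
  shows "f y \<le> f x"
proof -
  have ev: "\<And>z. f (- z) = f z" using assms(1) by (auto simp: nice_def even_prob_density_def)
  have "f \<bar>y\<bar> \<le> f \<bar>x\<bar>" using assms by (auto simp: nice_def)
  moreover have "\<And>z. f \<bar>z\<bar> = f z" using ev by (metis abs_of_nonneg abs_of_nonpos neg_0_le_iff_le abs_ge_zero linorder_le_cases)
  ultimately show ?thesis by simp
qed

lemma prob_density_measurable: "prob_density p \<Longrightarrow> p \<in> borel_measurable borel"
  by (auto simp: prob_density_def)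

lemma prob_density_prob_space:
  assumes "prob_density p"
  shows "prob_space (dens_measure p)"
proof (rule prob_spaceI)
  have [measurable]: "p \<in> borel_measurable borel" using assms by (simp add: prob_density_def)
  have "emeasure (dens_measure p) (space (dens_measure p)) = (\<integral>\<^sup>+x. ennreal (p x) \<partial>lborel)"
    by (simp add: dens_measure_def emeasure_density)
  also have "\<dots> = ennreal (integral\<^sup>L lborel p)"
    using assms nn_integral_eq_integral[of lborel p] by (auto simp: prob_density_def)
  also have "\<dots> = 1" using assms by (simp add: prob_density_def)
  finally show "emeasure (dens_measure p) (space (dens_measure p)) = 1" .
qed

lemma sets_dens_measure[simp, measurable_cong]: "sets (dens_measure p) = sets borel"
  by (simp add: dens_measure_def)

lemma space_dens_measure[simp]: "space (dens_measure p) = UNIV"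
  by (simp add: dens_measure_def)

lemma prob_densityI:
  fixes g :: "'a::euclidean_space \<Rightarrow> real"
  assumes [measurable]: "g \<in> borel_measurable borel" and nn: "\<And>x. 0 \<le> g x"
    and ps: "prob_space (density lborel (\<lambda>x. ennreal (g x)))"
  shows "prob_density g"
proof -
  have e: "(\<integral>\<^sup>+x. ennreal (g x) \<partial>lborel) = 1"
    using prob_space.emeasure_space_1[OF ps] by (simp add: emeasure_density)
  have int: "integrable lborel g"
    using e nn by (subst integrable_iff_bounded) auto
  have "integral\<^sup>L lborel g = enn2real (\<integral>\<^sup>+x. ennreal (g x) \<partial>lborel)"
    using nn by (subst integral_eq_nn_integral) auto
  then show ?thesis using e int nn by (auto simp: prob_density_def)
qed

lemma measure_dens_measure:
  fixes p :: "'a::euclidean_space \<Rightarrow> real"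
  assumes "prob_density p" "A \<in> sets borel"
  shows "measure (dens_measure p) A = (LINT x:A|lborel. p x)"
proof -
  have [measurable]: "p \<in> borel_measurable borel" "A \<in> sets borel" using assms by (auto simp: prob_density_def)
  have int: "integrable lborel p" and nn: "\<And>x. 0 \<le> p x" using assms by (auto simp: prob_density_def)
  have "emeasure (dens_measure p) A = (\<integral>\<^sup>+x. ennreal (p x) * indicator A x \<partial>lborel)"
    unfolding dens_measure_def by (rule emeasure_density) auto
  also have "\<dots> = (\<integral>\<^sup>+x. ennreal (indicator A x *\<^sub>R p x) \<partial>lborel)"
    by (intro nn_integral_cong) (simp split: split_indicator)
  also have "\<dots> = ennreal (integral\<^sup>L lborel (\<lambda>x. indicator A x *\<^sub>R p x))"
  proof (rule nn_integral_eq_integral)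
    show "integrable lborel (\<lambda>x. indicator A x *\<^sub>R p x)"
      using int by (rule integrable_mult_indicator[rotated]) simp
    show "AE x in lborel. 0 \<le> indicator A x *\<^sub>R p x" by (simp add: nn)
  qed
  finally have "emeasure (dens_measure p) A = ennreal (LINT x:A|lborel. p x)"
    by (simp add: set_lebesgue_integral_def)
  moreover have "0 \<le> (LINT x:A|lborel. p x)"
    unfolding set_lebesgue_integral_def by (rule Bochner_Integration.integral_nonneg) (simp add: nn)
  ultimately show ?thesis unfolding measure_def by simp
qed

lemma tail_eq_measure:
  assumes "prob_density g"
  shows "tail g d = measure (dens_measure g) {d..}"
  using measure_dens_measure[OF assms, of "{d..}"] by (simp add: tail_def)


lemma lborel_translate_nn:
  fixes F :: "'a::euclidean_space \<Rightarrow> ennreal"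
  assumes [measurable]: "F \<in> borel_measurable borel"
  shows "(\<integral>\<^sup>+y. F (c + y) \<partial>lborel) = (\<integral>\<^sup>+y. F y \<partial>lborel)"
proof -
  have "(\<integral>\<^sup>+y. F y \<partial>lborel) = (\<integral>\<^sup>+y. F y \<partial>distr lborel borel ((+) c))"
    by (simp add: lborel_distr_plus)
  also have "\<dots> = (\<integral>\<^sup>+y. F (c + y) \<partial>lborel)"
    by (subst nn_integral_distr) auto
  finally show ?thesis ..
qed

lemma null_preimage_linear:
  fixes L :: "'a::euclidean_space \<Rightarrow> 'b::euclidean_space"
  assumes L: "linear L" and R: "linear R" and LR: "\<And>y. L (R y) = y"
    and N: "N \<in> null_sets lborel"
  shows "L -` N \<in> null_sets lborel"
proof -
  have [measurable]: "N \<in> sets borel" using N by auto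
  have Lm[measurable]: "L \<in> borel_measurable borel"
    by (intro borel_measurable_continuous_onI linear_continuous_on) (simp add: L linear_conv_bounded_linear[symmetric])
  have Rm[measurable]: "R \<in> borel_measurable borel"
    by (intro borel_measurable_continuous_onI linear_continuous_on) (simp add: R linear_conv_bounded_linear[symmetric])
  define S where "S = L -` N"
  have [measurable]: "S \<in> sets borel" unfolding S_def using measurable_sets[OF Lm, of N] by simp
  have inner0: "(\<integral>\<^sup>+y. indicator N (L x + y) \<partial>lborel) = 0" for x
  proof -
    have "(\<integral>\<^sup>+y. indicator N (L x + y) \<partial>lborel) = (\<integral>\<^sup>+y. indicator N y \<partial>lborel)"
      by (rule lborel_translate_nn) simp
    also have "\<dots> = 0" using null_setsD1[OF N] by simp
    finally show ?thesis .
  qed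
  have "0 = (\<integral>\<^sup>+x. \<integral>\<^sup>+y. indicator N (L x + y) \<partial>lborel \<partial>(lborel::'a measure))"
    by (simp add: inner0)
  also have "\<dots> = (\<integral>\<^sup>+y. \<integral>\<^sup>+x. indicator N (L x + y) \<partial>(lborel::'a measure) \<partial>(lborel::'b measure))"
  proof (rule pair_sigma_finite.Fubini'[symmetric])
    show "pair_sigma_finite (lborel::'a measure) (lborel::'b measure)"
      by (simp add: lborel.sigma_finite_measure_axioms pair_sigma_finite.intro)
  qed measurable
  also have "\<dots> = (\<integral>\<^sup>+y. \<integral>\<^sup>+x. indicator S (R y + x) \<partial>(lborel::'a measure) \<partial>(lborel::'b measure))"
    by (intro nn_integral_cong) (simp add: S_def indicator_def linear_add[OF L] LR add.commute)
  also have "\<dots> = (\<integral>\<^sup>+y. emeasure lborel S \<partial>(lborel::'b measure))"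
    by (intro nn_integral_cong) (simp add: lborel_translate_nn)
  also have "\<dots> = emeasure lborel S * \<infinity>"
    by simp
  finally have "emeasure lborel S * \<infinity> = 0" by simp
  then have "emeasure lborel S = 0" by (simp add: ennreal_mult_eq_top_iff)
  then show ?thesis unfolding S_def[symmetric] by auto
qed

lemma ennreal_half_sum:
  fixes a b :: real assumes "0 \<le> a" "0 \<le> b"
  shows "ennreal ((a + b) / 2) = ennreal (1/2) * ennreal a + ennreal (1/2) * ennreal b"
proof -
  have "(a + b) / 2 = 1/2 * a + 1/2 * b" by simp
  then have "ennreal ((a + b) / 2) = ennreal (1/2 * a) + ennreal (1/2 * b)"
    using assms by (metis ennreal_plus mult_nonneg_nonneg zero_le_divide_1_iff zero_le_numeral)
  also have "\<dots> = ennreal (1/2) * ennreal a + ennreal (1/2) * ennreal b"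
    using assms by (metis ennreal_mult zero_le_divide_1_iff zero_le_numeral)
  finally show ?thesis .
qed

lemma lborel_distr_uminus_eucl: "distr lborel borel uminus = (lborel :: 'a::euclidean_space measure)"
  using lborel_affine[of "-1" "0::'a"] by (simp add: density_1)

lemma nn_integral_reflect:
  fixes F :: "'a::euclidean_space \<Rightarrow> ennreal"
  assumes [measurable]: "F \<in> borel_measurable borel"
  shows "(\<integral>\<^sup>+x. F (- x) \<partial>lborel) = (\<integral>\<^sup>+x. F x \<partial>lborel)"
proof -
  have "(\<integral>\<^sup>+y. F y \<partial>lborel) = (\<integral>\<^sup>+y. F y \<partial>distr lborel borel uminus)"
    by (simp add: lborel_distr_uminus_eucl)
  also have "\<dots> = (\<integral>\<^sup>+y. F (- y) \<partial>lborel)"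
    by (subst nn_integral_distr) auto
  finally show ?thesis ..
qed

lemma reflect_density:
  fixes u :: "'a::euclidean_space \<Rightarrow> ennreal"
  assumes [measurable]: "u \<in> borel_measurable borel"
  shows "distr (density lborel u) lborel uminus = density lborel (\<lambda>x. u (- x))"
proof (rule measure_eqI)
  fix A assume "A \<in> sets (distr (density lborel u) lborel uminus)"
  then have [measurable]: "A \<in> sets borel" by simp
  have [measurable]: "uminus -` A \<in> sets borel"
    using measurable_sets_borel[of uminus borel A] by simp
  have "emeasure (distr (density lborel u) lborel uminus) A = emeasure (density lborel u) (uminus -` A)"
    by (subst emeasure_distr) auto
  also have "\<dots> = (\<integral>\<^sup>+x. u x * indicator (uminus -` A) x \<partial>lborel)"
    by (subst emeasure_density) auto
  also have "\<dots> = (\<integral>\<^sup>+x. u (- (- x)) * indicator A (- x) \<partial>lborel)"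
    by (intro nn_integral_cong) (simp add: indicator_def)
  also have "\<dots> = (\<integral>\<^sup>+x. u (- x) * indicator A x \<partial>lborel)"
    by (rule nn_integral_reflect[where F = "\<lambda>x. u (- x) * indicator A x"]) measurable
  also have "\<dots> = emeasure (density lborel (\<lambda>x. u (- x))) A"
    by (subst emeasure_density) auto
  finally show "emeasure (distr (density lborel u) lborel uminus) A = emeasure (density lborel (\<lambda>x. u (- x))) A" .
qed simp

lemma density_exists_sym:
  fixes N :: "'b::euclidean_space measure"
  assumes ps: "prob_space N" and sN: "sets N = sets borel" and ac: "absolutely_continuous lborel N"
    and sym: "distr N lborel uminus = N"
  shows "\<exists>g. even_prob_density g \<and> N = dens_measure g"
proof -
  obtain f where f[measurable]: "f \<in> borel_measurable borel" and fN: "density lborel f = N"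
    using sigma_finite_measure.Radon_Nikodym[OF sigma_finite_lborel ac] sN by auto
  have sp: "space N = UNIV" using sets_eq_imp_space_eq[OF sN] by simp
  have "(\<integral>\<^sup>+x. f x \<partial>lborel) = emeasure N (space N)"
    unfolding sp by (subst fN[symmetric]) (simp add: emeasure_density)
  also have "\<dots> = 1" using prob_space.emeasure_space_1[OF ps] .
  finally have int1: "(\<integral>\<^sup>+x. f x \<partial>lborel) = 1" .
  have fin: "AE x in lborel. f x \<noteq> \<infinity>"
    by (rule nn_integral_noteq_infinite) (auto simp: int1)
  define h where "h x = enn2real (f x)" for x
  have h[measurable]: "h \<in> borel_measurable borel" unfolding h_def by measurable
  have hN: "density lborel (\<lambda>x. ennreal (h x)) = N"
    unfolding fN[symmetric] h_def
    by (rule density_cong) (use fin in \<open>auto simp: ennreal_enn2real_if\<close>)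
  have hN': "density lborel (\<lambda>x. ennreal (h (- x))) = N"
  proof -
    have "density lborel (\<lambda>x. ennreal (h (- x))) = distr (density lborel (\<lambda>x. ennreal (h x))) lborel uminus"
      by (rule reflect_density[symmetric]) measurable
    also have "\<dots> = N" using hN sym by simp
    finally show ?thesis .
  qed
  define g where "g x = (h x + h (- x)) / 2" for x
  have g[measurable]: "g \<in> borel_measurable borel" unfolding g_def by measurable
  have hnn: "0 \<le> h x" for x by (simp add: h_def)
  have gnn: "0 \<le> g x" for x using hnn[of x] hnn[of "-x"] by (simp add: g_def)
  have gN: "density lborel (\<lambda>x. ennreal (g x)) = N"
  proof (rule measure_eqI)
    fix A assume "A \<in> sets (density lborel (\<lambda>x. ennreal (g x)))"
    then have [measurable]: "A \<in> sets borel" by simp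
    have eq: "ennreal (g x) * indicator A x = ennreal (1/2) * (ennreal (h x) * indicator A x)
       + ennreal (1/2) * (ennreal (h (- x)) * indicator A x)" for x
      using ennreal_half_sum[OF hnn[of x] hnn[of "-x"]]
      by (simp add: g_def distrib_right mult.assoc split: split_indicator del: ennreal_plus)
    have "emeasure (density lborel (\<lambda>x. ennreal (g x))) A = (\<integral>\<^sup>+x. ennreal (g x) * indicator A x \<partial>lborel)"
      by (subst emeasure_density) auto
    also have "\<dots> = ennreal (1/2) * (\<integral>\<^sup>+x. ennreal (h x) * indicator A x \<partial>lborel)
        + ennreal (1/2) * (\<integral>\<^sup>+x. ennreal (h (- x)) * indicator A x \<partial>lborel)"
      unfolding eq by (subst nn_integral_add) (auto simp: nn_integral_cmult)
    also have "(\<integral>\<^sup>+x. ennreal (h x) * indicator A x \<partial>lborel) = emeasure N A"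
      by (subst hN[symmetric]) (subst emeasure_density; auto)
    also have "(\<integral>\<^sup>+x. ennreal (h (- x)) * indicator A x \<partial>lborel) = emeasure N A"
      by (subst hN'[symmetric]) (subst emeasure_density; auto)
    also have "ennreal (1/2) * emeasure N A + ennreal (1/2) * emeasure N A = (ennreal (1/2) + ennreal (1/2)) * emeasure N A"
      by (rule distrib_right[symmetric])
    also have "ennreal (1/2) + ennreal (1/2) = ennreal (1/2 + 1/2)"
      by (rule ennreal_plus[symmetric]) auto
    also have "ennreal (1/2 + 1/2) * emeasure N A = emeasure N A" by simp
    finally show "emeasure (density lborel (\<lambda>x. ennreal (g x))) A = emeasure N A" .
  qed (simp add: sN)
  have "even_prob_density g"
    unfolding even_prob_density_def
  proof
    show "prob_density g" using gnn gN ps by (intro prob_densityI) auto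
    show "\<forall>x. g (- x) = g x" by (simp add: g_def)
  qed
  moreover have "N = dens_measure g" by (simp add: dens_measure_def gN)
  ultimately show ?thesis by blast
qed

lemma linear_image_density:
  fixes L :: "'a::euclidean_space \<Rightarrow> 'b::euclidean_space"
  assumes h: "even_prob_density h" and L: "linear L" and R: "linear R" and LR: "\<And>y. L (R y) = y"
  shows "\<exists>g. even_prob_density g \<and> distr (dens_measure h) lborel L = dens_measure g"
proof (rule density_exists_sym)
  have hm[measurable]: "h \<in> borel_measurable borel" using h by (simp add: even_prob_density_def prob_density_def)
  have Lm[measurable]: "L \<in> borel_measurable borel"
    by (intro borel_measurable_continuous_onI linear_continuous_on) (simp add: L linear_conv_bounded_linear[symmetric])
  interpret H: prob_space "dens_measure h" using h by (simp add: even_prob_density_def prob_density_prob_space)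
  show "prob_space (distr (dens_measure h) lborel L)"
    by (rule H.prob_space_distr) simp
  show "sets (distr (dens_measure h) lborel L) = sets borel" by simp
  show "absolutely_continuous lborel (distr (dens_measure h) lborel L)"
    unfolding absolutely_continuous_def
  proof
    fix A :: "'b set" assume A: "A \<in> null_sets lborel"
    have [measurable]: "A \<in> sets borel" using A by auto
    have pre: "L -` A \<in> null_sets lborel" by (rule null_preimage_linear[OF L R LR A])
    have "L -` A \<in> null_sets (dens_measure h)"
      using absolutely_continuousI_density[of "\<lambda>x. ennreal (h x)" lborel] pre
      unfolding absolutely_continuous_def dens_measure_def by auto
    then show "A \<in> null_sets (distr (dens_measure h) lborel L)"
      by (auto simp: null_sets_distr_iff)
  qed
  have ev: "(\<lambda>x. ennreal (h (- x))) = (\<lambda>x. ennreal (h x))"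
    using h by (simp add: even_prob_density_def)
  have refl: "distr (dens_measure h) lborel uminus = dens_measure h"
    unfolding dens_measure_def by (subst reflect_density) (auto simp: ev)
  have "distr (distr (dens_measure h) lborel L) lborel uminus = distr (dens_measure h) lborel (uminus \<circ> L)"
    by (subst distr_distr) auto
  also have "uminus \<circ> L = L \<circ> uminus"
    by (auto simp: linear_neg[OF L])
  also have "distr (dens_measure h) lborel (L \<circ> uminus) = distr (distr (dens_measure h) lborel uminus) lborel L"
    by (subst distr_distr) auto
  finally show "distr (distr (dens_measure h) lborel L) lborel uminus = distr (dens_measure h) lborel L"
    by (simp add: refl)
qed


definition conv :: "(real \<Rightarrow> real) \<Rightarrow> (real \<Rightarrow> real) \<Rightarrow> real \<Rightarrow> real" where
  "conv f h x = (LINT y|lborel. f (x - y) * h y)"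

definition su :: "(real \<Rightarrow> real) \<Rightarrow> bool" where
  "su f \<longleftrightarrow> f \<in> borel_measurable borel \<and> (\<forall>x. 0 \<le> f x) \<and> (\<forall>x y. \<bar>x\<bar> \<le> \<bar>y\<bar> \<longrightarrow> f y \<le> f x)"

lemma su_props:
  assumes "su f"
  shows su_meas: "f \<in> borel_measurable borel"
    and su_nonneg: "0 \<le> f x"
    and su_abs_mono: "\<bar>x\<bar> \<le> \<bar>y\<bar> \<Longrightarrow> f y \<le> f x"
    and su_le0: "f x \<le> f 0"
    and su_even: "f (- x) = f x"
proof -
  have m: "\<And>x y. \<bar>x\<bar> \<le> \<bar>y\<bar> \<Longrightarrow> f y \<le> f x" using assms unfolding su_def by blast
  show "f \<in> borel_measurable borel" using assms unfolding su_def by blast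
  show "0 \<le> f x" using assms unfolding su_def by blast
  show "\<bar>x\<bar> \<le> \<bar>y\<bar> \<Longrightarrow> f y \<le> f x" by (rule m)
  show "f x \<le> f 0" by (rule m) simp
  show "f (- x) = f x" using m[of x "-x"] m[of "-x" x] by simp
qed

lemma nice_su: "nice f \<Longrightarrow> su f"
  unfolding su_def
proof (intro conjI allI impI)
  assume f: "nice f"
  show "f \<in> borel_measurable borel" using f by (simp add: nice_def even_prob_density_def prob_density_def)
  show "0 \<le> f x" for x using f by (simp add: nice_def even_prob_density_def prob_density_def)
  show "f y \<le> f x" if "\<bar>x\<bar> \<le> \<bar>y\<bar>" for x y using nice_abs_mono[OF f that] .
qed

lemma nice_props:
  assumes "nice f"
  shows nice_meas: "f \<in> borel_measurable borel"
    and nice_nonneg: "0 \<le> f x"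
    and nice_le0: "f x \<le> f 0"
    and nice_even: "f (- x) = f x"
    and nice_int: "integrable lborel f"
    and nice_pd: "prob_density f"
    and nice_epd: "even_prob_density f"
  using assms nice_abs_mono[OF assms, of 0 x]
  by (auto simp: nice_def even_prob_density_def prob_density_def)

lemma nice_cont:
  assumes "nice f"
  shows "continuous_on UNIV f"
proof -
  have c0: "continuous_on {0..} f" using assms by (simp add: nice_def)
  have "continuous_on {..0} (\<lambda>x. f (- x))"
    by (rule continuous_on_compose2[OF c0]) (auto intro: continuous_intros)
  then have c1: "continuous_on {..0} f"
    using nice_even[OF assms] by simp
  have "continuous_on ({0..} \<union> {..0}) f"
    by (rule continuous_on_closed_Un[OF _ _ c0 c1]) auto
  moreover have "{0..} \<union> {..0::real} = UNIV" by auto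
  ultimately show ?thesis by simp
qed

lemma int_fh:
  fixes h :: "real \<Rightarrow> real"
  assumes f: "su f" and hi: "integrable lborel h" and A[measurable]: "A \<in> borel_measurable borel" and d: "d \<noteq> 0"
  shows "integrable lborel (\<lambda>y. f (A y) * h (b + d * y))"
proof (rule Bochner_Integration.integrable_bound)
  have hm[measurable]: "h \<in> borel_measurable borel" using hi by auto
  have fm[measurable]: "f \<in> borel_measurable borel" using su_meas[OF f] .
  have "integrable lborel (\<lambda>y. h (b + d * y))"
    using hi by (intro lborel_integrable_real_affine[OF _ d])
  then show "integrable lborel (\<lambda>y. f 0 * h (b + d * y))" by simp
  show "(\<lambda>y. f (A y) * h (b + d * y)) \<in> borel_measurable lborel" by measurable
  show "AE y in lborel. norm (f (A y) * h (b + d * y)) \<le> norm (f 0 * h (b + d * y))"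
  proof (rule AE_I2)
    fix y
    have "\<bar>f (A y)\<bar> \<le> \<bar>f 0\<bar>" using su_nonneg[OF f] su_le0[OF f] by simp
    then show "norm (f (A y) * h (b + d * y)) \<le> norm (f 0 * h (b + d * y))"
      by (simp add: abs_mult mult_right_mono)
  qed
qed

lemma int_fh':
  fixes h :: "real \<Rightarrow> real"
  assumes f: "su f" and h: "integrable lborel h" and A[measurable]: "A \<in> borel_measurable borel"
  shows "integrable lborel (\<lambda>y. f (A y) * h y)"
  using int_fh[OF f h A, where b=0 and d=1] by simp

lemma conv_nonneg:
  assumes "nice f" "nice h"
  shows "0 \<le> conv f h x"
  unfolding conv_def
  by (rule Bochner_Integration.integral_nonneg) (simp add: nice_nonneg[OF assms(1)] nice_nonneg[OF assms(2)])

lemma conv_nn: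
  assumes f: "nice f" and h: "nice h"
  shows "ennreal (conv f h x) = (\<integral>\<^sup>+y. ennreal (f (x - y)) * ennreal (h y) \<partial>lborel)"
proof -
  have [measurable]: "f \<in> borel_measurable borel" "h \<in> borel_measurable borel"
    using nice_meas f h by auto
  have "(\<integral>\<^sup>+y. ennreal (f (x - y)) * ennreal (h y) \<partial>lborel) = (\<integral>\<^sup>+y. ennreal (f (x - y) * h y) \<partial>lborel)"
    by (intro nn_integral_cong) (simp add: ennreal_mult nice_nonneg[OF f] nice_nonneg[OF h])
  also have "\<dots> = ennreal (conv f h x)"
    unfolding conv_def
    by (rule nn_integral_eq_integral) (auto intro!: int_fh'[OF nice_su[OF f] nice_int[OF h]] simp: nice_nonneg[OF f] nice_nonneg[OF h])
  finally show ?thesis ..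
qed

lemma conv_continuous:
  assumes f: "nice f" and h: "nice h"
  shows "continuous_on UNIV (conv f h)"
proof (rule continuous_on_sequentiallyI)
  fix u :: "nat \<Rightarrow> real" and a :: real assume u: "u \<longlonglongrightarrow> a"
  have [measurable]: "f \<in> borel_measurable borel" "h \<in> borel_measurable borel"
    using nice_meas f h by auto
  have cf: "continuous_on UNIV f" by (rule nice_cont[OF f])
  show "(\<lambda>n. conv f h (u n)) \<longlonglongrightarrow> conv f h a"
    unfolding conv_def
  proof (rule integral_dominated_convergence[where w = "\<lambda>y. f 0 * h y"])
    show "integrable lborel (\<lambda>y. f 0 * h y)" using nice_int[OF h] by simp
    show "(\<lambda>y. f (a - y) * h y) \<in> borel_measurable lborel" by measurable
    show "(\<lambda>y. f (u i - y) * h y) \<in> borel_measurable lborel" for i by measurable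
    show "AE y in lborel. (\<lambda>i. f (u i - y) * h y) \<longlonglongrightarrow> f (a - y) * h y"
    proof (rule AE_I2)
      fix y
      have "(\<lambda>i. u i - y) \<longlonglongrightarrow> a - y" by (intro tendsto_intros u)
      then have "(\<lambda>i. f (u i - y)) \<longlonglongrightarrow> f (a - y)"
        using cf continuous_on_tendsto_compose[OF cf] by auto
      then show "(\<lambda>i. f (u i - y) * h y) \<longlonglongrightarrow> f (a - y) * h y" by (intro tendsto_intros)
    qed
    show "AE y in lborel. norm (f (u i - y) * h y) \<le> f 0 * h y" for i
      using nice_nonneg[OF f] nice_le0[OF f] nice_nonneg[OF h]
      by (auto simp: abs_mult intro!: mult_right_mono)
  qed
qed

lemma conv_aux1: fixes f h :: "real \<Rightarrow> real" assumes ef: "\<And>x. f (-x) = f x" and eh: "\<And>x. h (-x) = h x"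
  shows "f (- x - (0 + (-1) * y)) * h (0 + (-1) * y) = f (x - y) * h y"
  using ef[of "x - y"] eh[of y] by simp
lemma conv_aux2: fixes f h :: "real \<Rightarrow> real" assumes ef: "\<And>x. f (-x) = f x"
  shows "f (t - (s + t + (-1) * y)) * h (s + t + (-1) * y) = f (s - y) * h (s + t + (-1) * y)"
  using ef[of "s - y"] by simp
lemma conv_aux3: fixes f h :: "real \<Rightarrow> real" assumes ef: "\<And>x. f (-x) = f x"
  shows "f (s - (s + t + (-1) * y)) * h (s + t + (-1) * y) = f (t - y) * h (s + t + (-1) * y)"
  using ef[of "t - y"] by simp
lemma conv_aux4: fixes f h :: "real \<Rightarrow> real"
  shows "(f (s - y) * h y - f (s - y) * h (s + t + (-1) * y)) + (f (t - y) * h (s + t + (-1) * y) - f (t - y) * h y)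
     = (f (s - y) - f (t - y)) * (h y - h (s + t - y))"
  by (simp add: left_diff_distrib right_diff_distrib)

lemma conv_even:
  assumes f: "nice f" and h: "nice h"
  shows "conv f h (- x) = conv f h x"
proof -
  have "conv f h (- x) = \<bar>-1\<bar> *\<^sub>R (LINT y|lborel. f (- x - (0 + (-1) * y)) * h (0 + (-1) * y))"
    unfolding conv_def by (rule lborel_integral_real_affine) simp
  also have "\<dots> = conv f h x"
    unfolding conv_def
    using conv_aux1[of f h, OF nice_even[OF f] nice_even[OF h]] by simp
  finally show ?thesis .
qed

lemma pointwise_sign:
  assumes f: "su f" and h: "su h" and st: "0 \<le> s" "s \<le> t"
  shows "0 \<le> (f (s - y) - f (t - y)) * (h y - h (s + t - y))"
proof (cases "2 * y \<le> s + t")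
  case True
  have "f (t - y) \<le> f (s - y)" by (rule su_abs_mono[OF f]) (use True st in arith)
  moreover have "h (s + t - y) \<le> h y" by (rule su_abs_mono[OF h]) (use True st in arith)
  ultimately show ?thesis by simp
next
  case False
  have "f (s - y) \<le> f (t - y)" by (rule su_abs_mono[OF f]) (use False st in arith)
  moreover have "h y \<le> h (s + t - y)" by (rule su_abs_mono[OF h]) (use False st in arith)
  ultimately show ?thesis by (simp add: mult_nonpos_nonpos)
qed

lemma conv_mono:
  assumes f: "su f" and h: "su h" and hi: "integrable lborel h" and st: "0 \<le> s" "s \<le> t"
  shows "conv f h t \<le> conv f h s"
proof -
  have [measurable]: "f \<in> borel_measurable borel" "h \<in> borel_measurable borel"
    using su_meas f h by auto
  define F1 where "F1 y = f (s - y) * h y" for y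
  define F2 where "F2 y = f (t - y) * h y" for y
  define G1 where "G1 y = f (s - y) * h (s + t + (-1) * y)" for y
  define G2 where "G2 y = f (t - y) * h (s + t + (-1) * y)" for y
  have iF1: "integrable lborel F1" unfolding F1_def by (rule int_fh'[OF f hi]) measurable
  have iF2: "integrable lborel F2" unfolding F2_def by (rule int_fh'[OF f hi]) measurable
  have iG1: "integrable lborel G1" unfolding G1_def by (rule int_fh[OF f hi]) auto
  have iG2: "integrable lborel G2" unfolding G2_def by (rule int_fh[OF f hi]) auto
  have e2: "integral\<^sup>L lborel F2 = integral\<^sup>L lborel G1"
  proof -
    have "integral\<^sup>L lborel F2 = \<bar>-1\<bar> *\<^sub>R (LINT y|lborel. F2 (s + t + (-1) * y))"
      by (rule lborel_integral_real_affine) simp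
    also have "\<dots> = integral\<^sup>L lborel G1"
    proof -
      have "F2 (s + t + (-1) * y) = G1 y" for y
        unfolding F2_def G1_def using su_even[OF f, of "s - y"] by simp
      then show ?thesis by simp
    qed
    finally show ?thesis .
  qed
  have e1: "integral\<^sup>L lborel F1 = integral\<^sup>L lborel G2"
  proof -
    have "integral\<^sup>L lborel F1 = \<bar>-1\<bar> *\<^sub>R (LINT y|lborel. F1 (s + t + (-1) * y))"
      by (rule lborel_integral_real_affine) simp
    also have "\<dots> = integral\<^sup>L lborel G2"
    proof -
      have "F1 (s + t + (-1) * y) = G2 y" for y
        unfolding F1_def G2_def using su_even[OF f, of "t - y"] by simp
      then show ?thesis by simp
    qed
    finally show ?thesis .
  qed
  have "2 * (integral\<^sup>L lborel F1 - integral\<^sup>L lborel F2)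
      = (integral\<^sup>L lborel F1 - integral\<^sup>L lborel G1) + (integral\<^sup>L lborel G2 - integral\<^sup>L lborel F2)"
    using e1 e2 by simp
  also have "\<dots> = (LINT y|lborel. (F1 y - G1 y) + (G2 y - F2 y))"
    using iF1 iF2 iG1 iG2 by (simp add: Bochner_Integration.integral_diff Bochner_Integration.integral_add)
  also have "\<dots> = (LINT y|lborel. (f (s - y) - f (t - y)) * (h y - h (s + t - y)))"
  proof -
    have "(F1 y - G1 y) + (G2 y - F2 y) = (f (s - y) - f (t - y)) * (h y - h (s + t - y))" for y
      unfolding F1_def F2_def G1_def G2_def by (simp add: left_diff_distrib right_diff_distrib)
    then show ?thesis by simp
  qed
  also have "0 \<le> \<dots>"
    by (rule Bochner_Integration.integral_nonneg) (rule pointwise_sign[OF f h st])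
  finally show ?thesis unfolding conv_def F1_def F2_def by simp
qed

lemma conv_measure:
  assumes f: "nice f" and h: "nice h"
  shows "dens_measure f \<star> dens_measure h = dens_measure (conv f h)"
proof -
  have [measurable]: "f \<in> borel_measurable borel" "h \<in> borel_measurable borel"
    using nice_meas f h by auto
  have pf: "prob_space (dens_measure f)" and ph: "prob_space (dens_measure h)"
    using prob_density_prob_space nice_pd f h by auto
  have "dens_measure f \<star> dens_measure h
      = density lborel (\<lambda>x. \<integral>\<^sup>+y. ennreal (f (x - y)) * ennreal (h y) \<partial>lborel)"
    unfolding dens_measure_def
  proof (rule convolution_density)
    show "finite_measure (density lborel (\<lambda>x. ennreal (f x)))"
      using pf unfolding dens_measure_def by (simp add: prob_space.finite_measure)
    show "finite_measure (density lborel (\<lambda>x. ennreal (h x)))"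
      using ph unfolding dens_measure_def by (simp add: prob_space.finite_measure)
  qed auto
  also have "\<dots> = dens_measure (conv f h)"
    unfolding dens_measure_def by (simp add: conv_nn[OF f h])
  finally show ?thesis .
qed

lemma conv_nice:
  assumes f: "nice f" and h: "nice h"
  shows "nice (conv f h)"
proof -
  have cm[measurable]: "conv f h \<in> borel_measurable borel"
    using conv_continuous[OF f h] by (rule borel_measurable_continuous_onI)
  have pf: "prob_space (dens_measure f)" and ph: "prob_space (dens_measure h)"
    using prob_density_prob_space nice_pd f h by auto
  have "prob_space (dens_measure f \<star> dens_measure h)"
  proof -
    interpret FH: pair_prob_space "dens_measure f" "dens_measure h"
      using pf ph by (simp add: pair_prob_space_def pair_sigma_finite_def prob_space_imp_sigma_finite)
    show ?thesis unfolding convolution_def by (rule FH.prob_space_distr) simp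
  qed
  then have "prob_space (dens_measure (conv f h))"
    by (simp only: conv_measure[OF f h])
  then have ps: "prob_space (density lborel (\<lambda>x. ennreal (conv f h x)))"
    by (simp add: dens_measure_def)
  have "prob_density (conv f h)"
    by (rule prob_densityI[OF cm conv_nonneg[OF f h] ps])
  moreover have "\<forall>x. conv f h (- x) = conv f h x" using conv_even[OF f h] by simp
  moreover have "continuous_on {0..} (conv f h)"
    using conv_continuous[OF f h] by (rule continuous_on_subset) simp
  moreover have "\<forall>s t. 0 \<le> s \<longrightarrow> s \<le> t \<longrightarrow> conv f h t \<le> conv f h s"
    using conv_mono[OF nice_su[OF f] nice_su[OF h] nice_int[OF h]] by blast
  ultimately show ?thesis by (simp add: nice_def even_prob_density_def)
qed


lemma upset_compare:
  fixes V U :: "real measure"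
  assumes V: "prob_space V" and U: "prob_space U"
    and sV: "sets V = sets borel" and sU: "sets U = sets borel"
    and tl: "\<And>s. 0 \<le> s \<Longrightarrow> measure V {x. s < \<bar>x\<bar>} \<le> measure U {x. s < \<bar>x\<bar>}"
    and tle: "\<And>s. 0 \<le> s \<Longrightarrow> measure V {x. s \<le> \<bar>x\<bar>} \<le> measure U {x. s \<le> \<bar>x\<bar>}"
    and P: "\<And>a b. 0 \<le> a \<Longrightarrow> a \<le> b \<Longrightarrow> P a \<Longrightarrow> P b"
  shows "emeasure V {x. P \<bar>x\<bar>} \<le> emeasure U {x. P \<bar>x\<bar>}"
proof -
  interpret V: prob_space V by fact
  interpret U: prob_space U by fact
  have em: "emeasure V A = ennreal (measure V A)" "emeasure U A = ennreal (measure U A)" for A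
    by (simp_all add: V.emeasure_eq_measure U.emeasure_eq_measure)
  show ?thesis
  proof (cases "\<exists>a\<ge>0. P a")
    case False
    then have "{x. P \<bar>x\<bar>} = {}" by auto
    then show ?thesis by simp
  next
    case True
    define S where "S = {a. 0 \<le> a \<and> P a}"
    define t where "t = Inf S"
    have Sne: "S \<noteq> {}" using True by (auto simp: S_def)
    have Sb: "bdd_below S" by (auto simp: S_def bdd_below_def)
    have t0: "0 \<le> t" unfolding t_def using Sne by (intro cInf_greatest) (auto simp: S_def)
    have low: "t \<le> a" if "0 \<le> a" "P a" for a
      unfolding t_def using that Sb by (intro cInf_lower) (auto simp: S_def)
    show ?thesis
    proof (cases "P t")
      case True
      have "{x. P \<bar>x\<bar>} = {x. t \<le> \<bar>x\<bar>}"
        using low P[OF t0 _ True] by auto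
      then show ?thesis using tle[OF t0] by (simp add: em)
    next
      case False
      have "P \<bar>x\<bar> \<longleftrightarrow> t < \<bar>x\<bar>" for x
      proof
        assume "P \<bar>x\<bar>"
        then have "t \<le> \<bar>x\<bar>" by (intro low) auto
        moreover have "t \<noteq> \<bar>x\<bar>" using False \<open>P \<bar>x\<bar>\<close> by auto
        ultimately show "t < \<bar>x\<bar>" by simp
      next
        assume "t < \<bar>x\<bar>"
        then obtain b where "b \<in> S" "b < \<bar>x\<bar>"
          using cInf_less_iff[OF Sne Sb] unfolding t_def by auto
        then show "P \<bar>x\<bar>" using P[of b "\<bar>x\<bar>"] by (auto simp: S_def)
      qed
      then have "{x. P \<bar>x\<bar>} = {x. t < \<bar>x\<bar>}" by auto
      then show ?thesis using tl[OF t0] by (simp add: em)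
    qed
  qed
qed

lemma layer_cake_compare:
  fixes V U :: "real measure" and \<phi> :: "real \<Rightarrow> real"
  assumes V: "prob_space V" and U: "prob_space U"
    and sV: "sets V = sets borel" and sU: "sets U = sets borel"
    and tl: "\<And>s. 0 \<le> s \<Longrightarrow> measure V {x. s < \<bar>x\<bar>} \<le> measure U {x. s < \<bar>x\<bar>}"
    and tle: "\<And>s. 0 \<le> s \<Longrightarrow> measure V {x. s \<le> \<bar>x\<bar>} \<le> measure U {x. s \<le> \<bar>x\<bar>}"
    and \<phi>m[measurable]: "\<phi> \<in> borel_measurable borel"
    and \<phi>mono: "\<And>x y. \<bar>x\<bar> \<le> \<bar>y\<bar> \<Longrightarrow> \<phi> x \<le> \<phi> y"
  shows "(\<integral>\<^sup>+x. ennreal (\<phi> x) \<partial>V) \<le> (\<integral>\<^sup>+x. ennreal (\<phi> x) \<partial>U)"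
proof -
  interpret V: prob_space V by fact
  interpret U: prob_space U by fact
  have [measurable_cong]: "sets V = sets borel" "sets U = sets borel" using sV sU by auto
  have layer: "ennreal (\<phi> x) = (\<integral>\<^sup>+c. indicator {c. 0 \<le> c \<and> c < \<phi> x} c \<partial>lborel)" for x
  proof (cases "0 \<le> \<phi> x")
    case True
    have "{c. 0 \<le> c \<and> c < \<phi> x} = {0..<\<phi> x}" by auto
    then show ?thesis using True by simp
  next
    case False
    then have "{c. 0 \<le> c \<and> c < \<phi> x} = {}" by auto
    then show ?thesis using False by (simp add: ennreal_neg)
  qed
  have gen: "(\<integral>\<^sup>+x. ennreal (\<phi> x) \<partial>M) = (\<integral>\<^sup>+c. emeasure M {x. 0 \<le> c \<and> c < \<phi> x} \<partial>lborel)"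
    if M: "prob_space M" and sM: "sets M = sets borel" for M :: "real measure"
  proof -
    interpret M: prob_space M by fact
    have [measurable_cong]: "sets M = sets borel" by fact
    have sp: "space M = UNIV" using sets_eq_imp_space_eq[OF sM] by simp
    interpret PS: pair_sigma_finite M lborel
      by (simp add: M.sigma_finite_measure_axioms lborel.sigma_finite_measure_axioms pair_sigma_finite.intro)
    have "(\<integral>\<^sup>+x. ennreal (\<phi> x) \<partial>M) = (\<integral>\<^sup>+x. \<integral>\<^sup>+c. indicator {c. 0 \<le> c \<and> c < \<phi> x} c \<partial>lborel \<partial>M)"
      by (simp add: layer[symmetric])
    also have "\<dots> = (\<integral>\<^sup>+c. \<integral>\<^sup>+x. indicator {c. 0 \<le> c \<and> c < \<phi> x} c \<partial>M \<partial>lborel)"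
      by (rule PS.Fubini'[symmetric]) measurable
    also have "\<dots> = (\<integral>\<^sup>+c. emeasure M {x. 0 \<le> c \<and> c < \<phi> x} \<partial>lborel)"
    proof (intro nn_integral_cong)
      fix c
      have "(\<integral>\<^sup>+x. indicator {c. 0 \<le> c \<and> c < \<phi> x} c \<partial>M) = (\<integral>\<^sup>+x. indicator {x. 0 \<le> c \<and> c < \<phi> x} x \<partial>M)"
        by (intro nn_integral_cong) (simp add: indicator_def)
      also have "\<dots> = emeasure M {x. 0 \<le> c \<and> c < \<phi> x}"
        by (subst nn_integral_indicator) (auto simp: sp)
      finally show "(\<integral>\<^sup>+x. indicator {c. 0 \<le> c \<and> c < \<phi> x} c \<partial>M) = emeasure M {x. 0 \<le> c \<and> c < \<phi> x}" .
    qed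
    finally show ?thesis .
  qed
  have pw: "emeasure V {x. 0 \<le> c \<and> c < \<phi> x} \<le> emeasure U {x. 0 \<le> c \<and> c < \<phi> x}" for c
  proof (cases "0 \<le> c")
    case False then show ?thesis by simp
  next
    case True
    have abs_eq: "\<phi> \<bar>x\<bar> = \<phi> x" for x using \<phi>mono[of x "\<bar>x\<bar>"] \<phi>mono[of "\<bar>x\<bar>" x] by simp
    have "{x. 0 \<le> c \<and> c < \<phi> x} = {x. c < \<phi> \<bar>x\<bar>}" using True abs_eq by auto
    moreover have "emeasure V {x. c < \<phi> \<bar>x\<bar>} \<le> emeasure U {x. c < \<phi> \<bar>x\<bar>}"
    proof (rule upset_compare[OF V U sV sU tl tle])
      fix a b :: real assume "0 \<le> a" "a \<le> b" "c < \<phi> a"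
      then show "c < \<phi> b" using \<phi>mono[of a b] by simp
    qed
    ultimately show ?thesis by simp
  qed
  show ?thesis
    unfolding gen[OF V sV] gen[OF U sU]
    by (intro nn_integral_mono pw)
qed


lemma conv_continuous':
  assumes f: "nice f" and hi: "integrable lborel h" and hn: "\<And>x. 0 \<le> h x"
  shows "continuous_on UNIV (conv f h)"
proof (rule continuous_on_sequentiallyI)
  fix u :: "nat \<Rightarrow> real" and a :: real assume u: "u \<longlonglongrightarrow> a"
  have [measurable]: "f \<in> borel_measurable borel" "h \<in> borel_measurable borel"
    using nice_meas f hi by auto
  have cf: "continuous_on UNIV f" by (rule nice_cont[OF f])
  show "(\<lambda>n. conv f h (u n)) \<longlonglongrightarrow> conv f h a"
    unfolding conv_def
  proof (rule integral_dominated_convergence[where w = "\<lambda>y. f 0 * h y"])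
    show "integrable lborel (\<lambda>y. f 0 * h y)" using hi by simp
    show "(\<lambda>y. f (a - y) * h y) \<in> borel_measurable lborel" by measurable
    show "(\<lambda>y. f (u i - y) * h y) \<in> borel_measurable lborel" for i by measurable
    show "AE y in lborel. (\<lambda>i. f (u i - y) * h y) \<longlonglongrightarrow> f (a - y) * h y"
    proof (rule AE_I2)
      fix y
      have "(\<lambda>i. u i - y) \<longlonglongrightarrow> a - y" by (intro tendsto_intros u)
      then have "(\<lambda>i. f (u i - y)) \<longlonglongrightarrow> f (a - y)"
        using cf continuous_on_tendsto_compose[OF cf] by auto
      then show "(\<lambda>i. f (u i - y) * h y) \<longlonglongrightarrow> f (a - y) * h y" by (intro tendsto_intros)
    qed
    show "AE y in lborel. norm (f (u i - y) * h y) \<le> f 0 * h y" for i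
    proof (rule AE_I2)
      fix y
      have "\<bar>f (u i - y)\<bar> \<le> f 0" using nice_nonneg[OF f] nice_le0[OF f] by simp
      then show "norm (f (u i - y) * h y) \<le> f 0 * h y"
        using hn[of y] by (simp add: abs_mult mult_right_mono)
    qed
  qed
qed

definition win :: "real \<Rightarrow> real \<Rightarrow> real" where
  "win \<delta> z = indicator {z. \<bar>z\<bar> < \<delta>} z"

lemma win_su: "su (win \<delta>)"
  unfolding su_def win_def by (auto simp: indicator_def)

lemma win_int: "integrable lborel (win \<delta>)"
proof -
  have "win \<delta> = indicator {-\<delta> <..< \<delta>}"
    by (auto simp: win_def indicator_def fun_eq_iff abs_less_iff)
  moreover have "integrable lborel (indicator {-\<delta> <..< \<delta>} :: real \<Rightarrow> real)"
  proof (cases "0 \<le> \<delta>")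
    case True
    then show ?thesis using emeasure_lborel_Ioo[of "-\<delta>" \<delta>] by (intro integrable_real_indicator) auto
  next
    case False
    then have "{-\<delta> <..< \<delta>} = {}" by auto
    then show ?thesis by simp
  qed
  ultimately show ?thesis by simp
qed

lemma win_nonneg: "0 \<le> win \<delta> z" by (simp add: win_def)

lemma tail_fn_identity:
  fixes k :: "real \<Rightarrow> real"
  assumes k: "nice k" and d: "0 \<le> \<delta>"
  shows "measure (dens_measure k) {\<delta> - x..} + measure (dens_measure k) {\<delta> + x..} = 1 - conv k (win \<delta>) x"
proof -
  have [measurable]: "k \<in> borel_measurable borel" using nice_meas[OF k] .
  have pk: "prob_density k" using nice_pd[OF k] .
  have [measurable]: "win \<delta> \<in> borel_measurable borel" using su_meas[OF win_su] .
  have ik: "integrable lborel k" using nice_int[OF k] .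
  have Fb: "measure (dens_measure k) {c..} = (LINT y|lborel. indicator {c..} y * k y)" for c
    using measure_dens_measure[OF pk, of "{c..}"] by (simp add: set_lebesgue_integral_def)
  have i1: "integrable lborel (\<lambda>y. indicator {c..} y * k y)" for c
    using integrable_mult_indicator[OF _ ik, of "{c..}"] by simp
  have i2: "integrable lborel (\<lambda>y. indicator {..c} y * k y)" for c
    using integrable_mult_indicator[OF _ ik, of "{..c}"] by simp
  have i3: "integrable lborel (\<lambda>y. win \<delta> (x - y) * k y)"
    using int_fh'[OF win_su ik, of "\<lambda>y. x - y"] by (simp add: mult.commute)
  have A: "measure (dens_measure k) {\<delta> - x..} = (LINT y|lborel. indicator {..x - \<delta>} y * k y)"
  proof -
    have "measure (dens_measure k) {\<delta> - x..} = \<bar>-1\<bar> *\<^sub>R (LINT y|lborel. indicator {\<delta> - x..} (0 + (-1) * y) * k (0 + (-1) * y))"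
      unfolding Fb by (rule lborel_integral_real_affine) simp
    also have "\<dots> = (LINT y|lborel. indicator {..x - \<delta>} y * k y)"
    proof -
      have "indicator {\<delta> - x..} (0 + (-1) * y) * k (0 + (-1) * y) = indicator {..x - \<delta>} y * k y" for y :: real
        using nice_even[OF k, of y] by (simp add: indicator_def)
      then show ?thesis by simp
    qed
    finally show ?thesis .
  qed
  have W: "conv k (win \<delta>) x = (LINT y|lborel. win \<delta> (x - y) * k y)"
  proof -
    have "conv k (win \<delta>) x = \<bar>-1\<bar> *\<^sub>R (LINT y|lborel. k (x - (x + (-1) * y)) * win \<delta> (x + (-1) * y))"
      unfolding conv_def by (rule lborel_integral_real_affine) simp
    also have "\<dots> = (LINT y|lborel. win \<delta> (x - y) * k y)"
    proof -
      have "k (x - (x + (-1) * y)) * win \<delta> (x + (-1) * y) = win \<delta> (x - y) * k y" for y :: real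
        by (simp add: mult.commute)
      then show ?thesis by (simp add: mult.commute)
    qed
    finally show ?thesis .
  qed
  have "measure (dens_measure k) {\<delta> - x..} + measure (dens_measure k) {\<delta> + x..} + conv k (win \<delta>) x
     = (LINT y|lborel. indicator {..x - \<delta>} y * k y + indicator {\<delta> + x..} y * k y + win \<delta> (x - y) * k y)"
  proof -
    have "measure (dens_measure k) {\<delta> - x..} + measure (dens_measure k) {\<delta> + x..} + conv k (win \<delta>) x
      = (LINT y|lborel. indicator {..x - \<delta>} y * k y) + (LINT y|lborel. indicator {\<delta> + x..} y * k y)
        + (LINT y|lborel. win \<delta> (x - y) * k y)"
      by (simp only: A W Fb[of "\<delta> + x"])
    also have "\<dots> = (LINT y|lborel. indicator {..x - \<delta>} y * k y + indicator {\<delta> + x..} y * k y + win \<delta> (x - y) * k y)"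
      using i1 i2 i3 by (simp add: Bochner_Integration.integral_add)
    finally show ?thesis .
  qed
  also have "\<dots> = (LINT y|lborel. k y)"
  proof (rule integral_cong_AE)
    show "AE y in lborel. indicator {..x - \<delta>} y * k y + indicator {\<delta> + x..} y * k y + win \<delta> (x - y) * k y = k y"
      using AE_lborel_singleton[of x]
    proof eventually_elim
      case (elim y)
      then show ?case using d by (auto simp: indicator_def win_def abs_less_iff)
    qed
  qed measurable
  also have "\<dots> = 1" using pk by (simp add: prob_density_def)
  finally show ?thesis by simp
qed



lemma tail_meas_measurable:
  assumes "finite_measure H" "sets H = sets (borel :: real measure)"
  shows "(\<lambda>c. measure H {c..}) \<in> borel_measurable borel"
proof -
  interpret H: finite_measure H by fact
  have "mono (\<lambda>c. - measure H {c..})"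
    unfolding mono_def
  proof (intro allI impI)
    fix x y :: real assume "x \<le> y"
    then have "{y..} \<subseteq> {x..}" by auto
    moreover have "{x..} \<in> sets H" using assms(2) by simp
    ultimately show "- measure H {x..} \<le> - measure H {y..}" by (simp add: H.finite_measure_mono)
  qed
  then have "(\<lambda>c. - measure H {c..}) \<in> borel_measurable borel" by (rule borel_measurable_mono)
  then have "(\<lambda>c. - (- measure H {c..})) \<in> borel_measurable borel" by measurable
  then show ?thesis by simp
qed

lemma comp_conv:
  fixes V U :: "real measure"
  assumes V: "prob_space V" and U: "prob_space U"
    and sV: "sets V = sets borel" and sU: "sets U = sets borel"
    and symV: "distr V borel uminus = V" and symU: "distr U borel uminus = U"
    and tl: "\<And>s. 0 \<le> s \<Longrightarrow> measure V {x. s < \<bar>x\<bar>} \<le> measure U {x. s < \<bar>x\<bar>}"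
    and tle: "\<And>s. 0 \<le> s \<Longrightarrow> measure V {x. s \<le> \<bar>x\<bar>} \<le> measure U {x. s \<le> \<bar>x\<bar>}"
    and k: "nice k" and d: "0 \<le> \<delta>"
  shows "measure (V \<star> dens_measure k) {\<delta>..} \<le> measure (U \<star> dens_measure k) {\<delta>..}"
proof -
  define H where "H = dens_measure k"
  have pH: "prob_space H" unfolding H_def using prob_density_prob_space[OF nice_pd[OF k]] .
  interpret H: prob_space H by fact
  have sH: "sets H = sets borel" by (simp add: H_def)
  have spH: "space H = UNIV" by (simp add: H_def)
  define Fb where "Fb c = measure H {c..}" for c
  have Fbm[measurable]: "Fb \<in> borel_measurable borel"
    unfolding Fb_def by (rule tail_meas_measurable[OF H.finite_measure_axioms sH])
  define \<psi> where "\<psi> x = Fb (\<delta> - x) + Fb (\<delta> + x)" for x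
  define W where "W = conv k (win \<delta>)"
  have \<psi>W: "\<psi> x = 1 - W x" for x
    unfolding \<psi>_def Fb_def W_def H_def using tail_fn_identity[OF k d, of x] by simp
  have \<psi>m[measurable]: "\<psi> \<in> borel_measurable borel" unfolding \<psi>_def by measurable
  have \<psi>ev: "\<psi> (- x) = \<psi> x" for x unfolding \<psi>_def by simp
  have Wev: "W (- x) = W x" for x using \<psi>ev[of x] \<psi>W[of x] \<psi>W[of "-x"] by simp
  have Wmono: "W t \<le> W s" if "0 \<le> s" "s \<le> t" for s t
    unfolding W_def by (rule conv_mono[OF nice_su[OF k] win_su win_int that])
  have Wabs: "W \<bar>x\<bar> = W x" for x using Wev[of x] by (cases "0 \<le> x") auto
  have \<psi>mono: "\<psi> x \<le> \<psi> y" if "\<bar>x\<bar> \<le> \<bar>y\<bar>" for x y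
  proof -
    have "W \<bar>y\<bar> \<le> W \<bar>x\<bar>" by (rule Wmono) (use that in auto)
    then show ?thesis using Wabs[of x] Wabs[of y] \<psi>W[of x] \<psi>W[of y] by simp
  qed
  have Fbnn: "0 \<le> Fb c" for c by (simp add: Fb_def)
  have gen: "emeasure (M \<star> H) {\<delta>..} + emeasure (M \<star> H) {\<delta>..} = (\<integral>\<^sup>+x. ennreal (\<psi> x) \<partial>M)"
    if M: "prob_space M" and sM: "sets M = sets borel" and symM: "distr M borel uminus = M" for M :: "real measure"
  proof -
    interpret M: prob_space M by fact
    have [measurable_cong]: "sets M = sets borel" by fact
    have spM: "space M = UNIV" using sets_eq_imp_space_eq[OF sM] by simp
    have e1: "emeasure (M \<star> H) {\<delta>..} = (\<integral>\<^sup>+x. ennreal (Fb (\<delta> - x)) \<partial>M)"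
    proof -
      have "emeasure (M \<star> H) {\<delta>..} = (\<integral>\<^sup>+x. emeasure H {a. a + x \<in> {\<delta>..}} \<partial>M)"
            by (rule convolution_emeasure) (simp_all add: sH sM spM spH M.finite_measure_axioms H.finite_measure_axioms)
      also have "\<dots> = (\<integral>\<^sup>+x. ennreal (Fb (\<delta> - x)) \<partial>M)"
      proof (intro nn_integral_cong)
        fix x
        have "{a. a + x \<in> {\<delta>..}} = {\<delta> - x..}" by auto
        then show "emeasure H {a. a + x \<in> {\<delta>..}} = ennreal (Fb (\<delta> - x))"
          by (simp add: Fb_def H.emeasure_eq_measure)
      qed
      finally show ?thesis .
    qed
    have e2: "(\<integral>\<^sup>+x. ennreal (Fb (\<delta> - x)) \<partial>M) = (\<integral>\<^sup>+x. ennreal (Fb (\<delta> + x)) \<partial>M)"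
    proof -
      have "(\<integral>\<^sup>+x. ennreal (Fb (\<delta> - x)) \<partial>M) = (\<integral>\<^sup>+x. ennreal (Fb (\<delta> - x)) \<partial>distr M borel uminus)"
        by (simp add: symM)
      also have "\<dots> = (\<integral>\<^sup>+x. ennreal (Fb (\<delta> - (- x))) \<partial>M)"
        by (subst nn_integral_distr) auto
      finally show ?thesis by simp
    qed
    have "emeasure (M \<star> H) {\<delta>..} + emeasure (M \<star> H) {\<delta>..}
        = (\<integral>\<^sup>+x. ennreal (Fb (\<delta> - x)) \<partial>M) + (\<integral>\<^sup>+x. ennreal (Fb (\<delta> + x)) \<partial>M)"
      using e1 e2 by simp
    also have "\<dots> = (\<integral>\<^sup>+x. ennreal (Fb (\<delta> - x)) + ennreal (Fb (\<delta> + x)) \<partial>M)"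
      by (rule nn_integral_add[symmetric]) auto
    also have "\<dots> = (\<integral>\<^sup>+x. ennreal (\<psi> x) \<partial>M)"
      by (intro nn_integral_cong) (simp add: \<psi>_def Fbnn)
    finally show ?thesis .
  qed
  have "(\<integral>\<^sup>+x. ennreal (\<psi> x) \<partial>V) \<le> (\<integral>\<^sup>+x. ennreal (\<psi> x) \<partial>U)"
    by (rule layer_cake_compare[OF V U sV sU tl tle \<psi>m \<psi>mono])
  then have le: "emeasure (V \<star> H) {\<delta>..} + emeasure (V \<star> H) {\<delta>..} \<le> emeasure (U \<star> H) {\<delta>..} + emeasure (U \<star> H) {\<delta>..}"
    using gen[OF V sV symV] gen[OF U sU symU] by simp
  have fV: "finite_measure (V \<star> H)"
    by (rule convolution_finite) (simp_all add: sV sH prob_space.finite_measure[OF V] H.finite_measure_axioms)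
  have fU: "finite_measure (U \<star> H)"
    by (rule convolution_finite) (simp_all add: sU sH prob_space.finite_measure[OF U] H.finite_measure_axioms)
  have "ennreal (measure (V \<star> H) {\<delta>..} + measure (V \<star> H) {\<delta>..}) \<le> ennreal (measure (U \<star> H) {\<delta>..} + measure (U \<star> H) {\<delta>..})"
  proof -
    have "emeasure (V \<star> H) {\<delta>..} = ennreal (measure (V \<star> H) {\<delta>..})"
      by (rule finite_measure.emeasure_eq_measure[OF fV])
    moreover have "emeasure (U \<star> H) {\<delta>..} = ennreal (measure (U \<star> H) {\<delta>..})"
      by (rule finite_measure.emeasure_eq_measure[OF fU])
    ultimately show ?thesis using le by (simp only: ennreal_plus[OF measure_nonneg measure_nonneg])
  qed
  then have "measure (V \<star> H) {\<delta>..} + measure (V \<star> H) {\<delta>..} \<le> measure (U \<star> H) {\<delta>..} + measure (U \<star> H) {\<delta>..}"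
    by (subst (asm) ennreal_le_iff) auto
  then show ?thesis unfolding H_def by simp
qed


declare transpose_matrix_vector[simp del]

lemma inner_mat_transpose: "(x :: real^'m) \<bullet> (M *v y) = (transpose M *v x) \<bullet> y"
  by (metis dot_lmul_matrix transpose_transpose vector_transpose_matrix)

lemma pd_invertible:
  fixes M :: "real^'r^'r"
  assumes "pd_mat M"
  shows "M ** matrix_inv M = mat 1" "matrix_inv M ** M = mat 1"
proof -
  have inj: "inj ((*v) M)"
  proof (rule injI)
    fix x y assume "M *v x = M *v y"
    then have "M *v (x - y) = 0" by (simp add: matrix_vector_mult_diff_distrib)
    then have "(x - y) \<bullet> (M *v (x - y)) = 0" by simp
    then have "x - y = 0"
    proof (rule contrapos_pp)
      assume "x - y \<noteq> 0"
      then have "0 < (x - y) \<bullet> (M *v (x - y))" using assms by (simp add: pd_mat_def)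
      then show "(x - y) \<bullet> (M *v (x - y)) \<noteq> 0" by simp
    qed
    then show "x = y" by simp
  qed
  then obtain B :: "real^'r^'r" where "B ** M = mat 1"
    using matrix_left_invertible_injective by blast
  then have "invertible M" using invertible_left_inverse by blast
  then have "M ** matrix_inv M = mat 1 \<and> matrix_inv M ** M = mat 1"
    unfolding invertible_def matrix_inv_def by (rule someI_ex)
  then show "M ** matrix_inv M = mat 1" "matrix_inv M ** M = mat 1" by auto
qed

definition Lmap :: "real^'r^'r \<Rightarrow> real^'n^'r \<Rightarrow> real^'m^'r \<Rightarrow> ((real^'n) \<times> (real^'m)) \<Rightarrow> real^'r" where
  "Lmap \<Theta> A B w = matrix_inv \<Theta> *v (A *v fst w + B *v snd w)"

lemma Lmap_linear: "linear (Lmap \<Theta> A B)"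
  unfolding Lmap_def
  by (intro linearI) (auto simp: matrix_vector_right_distrib algebra_simps matrix_vector_mult_scaleR)

definition Rmap :: "real^'r^'r \<Rightarrow> real^'n^'r \<Rightarrow> real^'m^'r \<Rightarrow> real^'r \<Rightarrow> ((real^'n) \<times> (real^'m))" where
  "Rmap \<Theta> A B y = (let z = matrix_inv (A ** transpose A + B ** transpose B) *v (\<Theta> *v y) in
      (transpose A *v z, transpose B *v z))"

lemma Rmap_linear: "linear (Rmap \<Theta> A B)"
  unfolding Rmap_def Let_def
  by (intro linearI) (auto simp: matrix_vector_right_distrib matrix_vector_mult_scaleR)

lemma LR_id:
  assumes "pd_mat \<Theta>" "pd_mat (A ** transpose A + B ** transpose B)"
  shows "Lmap \<Theta> A B (Rmap \<Theta> A B y) = y"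
proof -
  define S where "S = A ** transpose A + B ** transpose B"
  define z where "z = matrix_inv S *v (\<Theta> *v y)"
  have "A *v (transpose A *v z) + B *v (transpose B *v z) = S *v z"
    by (simp add: S_def matrix_vector_mul_assoc matrix_vector_mult_add_rdistrib)
  also have "\<dots> = (S ** matrix_inv S) *v (\<Theta> *v y)"
    unfolding z_def by (rule matrix_vector_mul_assoc)
  also have "\<dots> = \<Theta> *v y"
    using pd_invertible(1)[OF assms(2)] by (simp add: S_def)
  finally have "A *v (transpose A *v z) + B *v (transpose B *v z) = \<Theta> *v y" .
  then have "Lmap \<Theta> A B (Rmap \<Theta> A B y) = matrix_inv \<Theta> *v (\<Theta> *v y)"
    unfolding Lmap_def Rmap_def Let_def S_def[symmetric] z_def[symmetric] by (simp only: fst_conv snd_conv)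
  also have "\<dots> = (matrix_inv \<Theta> ** \<Theta>) *v y" by (rule matrix_vector_mul_assoc)
  also have "\<dots> = y" using pd_invertible(2)[OF assms(1)] by simp
  finally show ?thesis .
qed

lemma e_Lmap:
  "e \<bullet> Lmap \<Theta> A B (\<eta>, \<zeta>) = (transpose A *v (transpose (matrix_inv \<Theta>) *v e)) \<bullet> \<eta>
      + (transpose B *v (transpose (matrix_inv \<Theta>) *v e)) \<bullet> \<zeta>"
proof -
  define w where "w = transpose (matrix_inv \<Theta>) *v e"
  have "e \<bullet> Lmap \<Theta> A B (\<eta>, \<zeta>) = w \<bullet> (A *v \<eta> + B *v \<zeta>)"
    unfolding Lmap_def w_def by (simp only: inner_mat_transpose[of e] fst_conv snd_conv)
  also have "\<dots> = w \<bullet> (A *v \<eta>) + w \<bullet> (B *v \<zeta>)" by (rule inner_add_right)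
  also have "w \<bullet> (A *v \<eta>) = (transpose A *v w) \<bullet> \<eta>" by (rule inner_mat_transpose)
  also have "w \<bullet> (B *v \<zeta>) = (transpose B *v w) \<bullet> \<zeta>" by (rule inner_mat_transpose)
  finally show ?thesis unfolding w_def .
qed

lemma coeff_norm_le:
  fixes \<Theta> :: "real^'r^'r" and A :: "real^'n^'r"
  assumes pd: "pd_mat \<Theta>" and ps: "psd_mat (\<Theta> ** \<Theta> - A ** transpose A)" and e: "norm e = 1"
  shows "norm (transpose A *v (transpose (matrix_inv \<Theta>) *v e)) \<le> 1"
proof -
  define w where "w = transpose (matrix_inv \<Theta>) *v e"
  have symT: "transpose \<Theta> = \<Theta>" using pd by (simp add: pd_mat_def)
  have Tw: "\<Theta> *v w = e"
  proof -
    have "\<Theta> ** transpose (matrix_inv \<Theta>) = transpose (matrix_inv \<Theta> ** transpose \<Theta>)"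
      by (simp add: matrix_transpose_mul)
    also have "\<dots> = mat 1" using pd_invertible(2)[OF pd] symT by simp
    finally show ?thesis unfolding w_def by (simp add: matrix_vector_mul_assoc)
  qed
  have "0 \<le> w \<bullet> ((\<Theta> ** \<Theta> - A ** transpose A) *v w)" using ps by (simp add: psd_mat_def)
  also have "\<dots> = w \<bullet> (\<Theta> *v (\<Theta> *v w)) - w \<bullet> (A *v (transpose A *v w))"
    by (simp only: matrix_vector_mult_diff_rdistrib matrix_vector_mul_assoc inner_diff_right)
  also have "w \<bullet> (\<Theta> *v (\<Theta> *v w)) = (\<Theta> *v w) \<bullet> (\<Theta> *v w)"
    using inner_mat_transpose[of w \<Theta> "\<Theta> *v w"] symT by simp
  also have "w \<bullet> (A *v (transpose A *v w)) = (transpose A *v w) \<bullet> (transpose A *v w)"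
    by (rule inner_mat_transpose)
  finally have "0 \<le> e \<bullet> e - (transpose A *v w) \<bullet> (transpose A *v w)"
    by (simp only: Tw)
  moreover have "e \<bullet> e = 1" using e by (simp add: dot_square_norm)
  ultimately have "(transpose A *v w) \<bullet> (transpose A *v w) \<le> 1" by simp
  then have "norm (transpose A *v w)^2 \<le> 1^2" by (simp add: power2_norm_eq_inner)
  then show ?thesis unfolding w_def by (rule power2_le_imp_le) simp
qed

lemma coeff_nonzero:
  fixes \<Theta> :: "real^'r^'r" and A :: "real^'n^'r" and B :: "real^'m^'r"
  assumes pd: "pd_mat \<Theta>" and pdS: "pd_mat (A ** transpose A + B ** transpose B)" and e: "norm e = 1"
  shows "transpose A *v (transpose (matrix_inv \<Theta>) *v e) \<noteq> 0 \<or> transpose B *v (transpose (matrix_inv \<Theta>) *v e) \<noteq> 0"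
proof (rule ccontr)
  define w where "w = transpose (matrix_inv \<Theta>) *v e"
  assume "\<not> ?thesis"
  then have a0: "transpose A *v w = 0" and b0: "transpose B *v w = 0" by (auto simp: w_def)
  have symT: "transpose \<Theta> = \<Theta>" using pd by (simp add: pd_mat_def)
  have Tw: "\<Theta> *v w = e"
  proof -
    have "\<Theta> ** transpose (matrix_inv \<Theta>) = transpose (matrix_inv \<Theta> ** transpose \<Theta>)"
      by (simp add: matrix_transpose_mul)
    also have "\<dots> = mat 1" using pd_invertible(2)[OF pd] symT by simp
    finally show ?thesis unfolding w_def by (simp add: matrix_vector_mul_assoc)
  qed
  have "w \<noteq> 0" using Tw e by auto
  then have "0 < w \<bullet> ((A ** transpose A + B ** transpose B) *v w)" using pdS by (simp add: pd_mat_def)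
  also have "(A ** transpose A + B ** transpose B) *v w = 0"
    by (simp add: matrix_vector_mult_add_rdistrib matrix_vector_mul_assoc[symmetric] a0 b0)
  finally show False by simp
qed


lemma epd_meas: "even_prob_density p \<Longrightarrow> p \<in> borel_measurable borel"
  by (simp add: even_prob_density_def prob_density_def)
lemma epd_nonneg: "even_prob_density p \<Longrightarrow> 0 \<le> p x"
  by (simp add: even_prob_density_def prob_density_def)
lemma epd_even: "even_prob_density p \<Longrightarrow> p (- x) = p x"
  by (simp add: even_prob_density_def)
lemma epd_prob: "even_prob_density p \<Longrightarrow> prob_space (dens_measure p)"
  by (simp add: even_prob_density_def prob_density_prob_space)

lemma prod_density:
  fixes p :: "'a::euclidean_space \<Rightarrow> real" and q :: "'b::euclidean_space \<Rightarrow> real"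
  assumes p: "even_prob_density p" and q: "even_prob_density q"
  shows "dens_measure p \<Otimes>\<^sub>M dens_measure q = dens_measure (\<lambda>w. p (fst w) * q (snd w))"
    and "even_prob_density (\<lambda>w. p (fst w) * q (snd w))"
proof -
  have [measurable]: "p \<in> borel_measurable borel" "q \<in> borel_measurable borel"
    using epd_meas p q by auto
  interpret P: prob_space "dens_measure p" using epd_prob[OF p] .
  interpret Q: prob_space "dens_measure q" using epd_prob[OF q] .
  have pqm: "(\<lambda>w. p (fst w) * q (snd w)) \<in> borel_measurable (borel :: ('a \<times> 'b) measure)"
  proof -
    have "(\<lambda>w. p (fst w) * q (snd w)) \<in> borel_measurable (borel \<Otimes>\<^sub>M borel :: ('a \<times> 'b) measure)" by measurable
    then show ?thesis by (simp add: borel_prod)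
  qed
  have pqm2: "(\<lambda>(x, y). ennreal (p x) * ennreal (q y)) \<in> borel_measurable (borel :: ('a \<times> 'b) measure)"
  proof -
    have "(\<lambda>(x, y). ennreal (p x) * ennreal (q y)) \<in> borel_measurable (borel \<Otimes>\<^sub>M borel :: ('a \<times> 'b) measure)" by measurable
    then show ?thesis by (simp add: borel_prod)
  qed
  have "dens_measure p \<Otimes>\<^sub>M dens_measure q = density (lborel \<Otimes>\<^sub>M lborel) (\<lambda>(x,y). ennreal (p x) * ennreal (q y))"
    unfolding dens_measure_def
  proof (rule pair_measure_density)
    show "sigma_finite_measure (density lborel (\<lambda>x. ennreal (q x)))"
      using Q.sigma_finite_measure_axioms by (simp add: dens_measure_def)
  qed (auto simp: lborel.sigma_finite_measure_axioms)
  also have "\<dots> = dens_measure (\<lambda>w. p (fst w) * q (snd w))"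
    unfolding dens_measure_def lborel_prod
  proof (rule density_cong)
    show "(\<lambda>(x, y). ennreal (p x) * ennreal (q y)) \<in> borel_measurable lborel"
      using pqm2 by simp
    show "(\<lambda>w. ennreal (p (fst w) * q (snd w))) \<in> borel_measurable lborel"
      using pqm by simp
  qed (auto simp: ennreal_mult epd_nonneg[OF p] epd_nonneg[OF q])
  finally show eq: "dens_measure p \<Otimes>\<^sub>M dens_measure q = dens_measure (\<lambda>w. p (fst w) * q (snd w))" .
  interpret PQ: pair_prob_space "dens_measure p" "dens_measure q" ..
  have "prob_space (dens_measure (\<lambda>w. p (fst w) * q (snd w)))"
    using PQ.prob_space_axioms eq by simp
  then have "prob_density (\<lambda>w. p (fst w) * q (snd w))"
    using pqm by (intro prob_densityI) (auto simp: dens_measure_def epd_nonneg[OF p] epd_nonneg[OF q])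
  then show "even_prob_density (\<lambda>w. p (fst w) * q (snd w))"
    using epd_even[OF p] epd_even[OF q] by (simp add: even_prob_density_def)
qed

lemma law_eq:
  "law_xi \<Theta> A B p q = distr (dens_measure p \<Otimes>\<^sub>M dens_measure q) lborel (Lmap \<Theta> A B)"
  unfolding law_xi_def Lmap_def by (simp add: case_prod_beta')

lemma split_sum:
  fixes p :: "'a::euclidean_space \<Rightarrow> real" and q :: "'b::euclidean_space \<Rightarrow> real"
  assumes p: "even_prob_density p" and q: "even_prob_density q"
  shows "distr (dens_measure p \<Otimes>\<^sub>M dens_measure q) lborel (\<lambda>w. a \<bullet> fst w + b \<bullet> snd w)
       = (distr (dens_measure p) lborel (\<lambda>x. a \<bullet> x) \<star> distr (dens_measure q) lborel (\<lambda>y. b \<bullet> y))"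
proof -
  interpret P: prob_space "dens_measure p" using epd_prob[OF p] .
  interpret Q: prob_space "dens_measure q" using epd_prob[OF q] .
  have PY: "sigma_finite_measure (distr (dens_measure q) lborel (\<lambda>y. b \<bullet> y))"
    by (intro prob_space_imp_sigma_finite Q.prob_space_distr) simp
  have "(distr (dens_measure p) lborel (\<lambda>x. a \<bullet> x) \<star> distr (dens_measure q) lborel (\<lambda>y. b \<bullet> y))
     = distr (distr (dens_measure p) lborel (\<lambda>x. a \<bullet> x) \<Otimes>\<^sub>M distr (dens_measure q) lborel (\<lambda>y. b \<bullet> y)) borel (\<lambda>(x, y). x + y)"
    by (simp add: convolution_def)
  also have "distr (dens_measure p) lborel (\<lambda>x. a \<bullet> x) \<Otimes>\<^sub>M distr (dens_measure q) lborel (\<lambda>y. b \<bullet> y)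
     = distr (dens_measure p \<Otimes>\<^sub>M dens_measure q) (lborel \<Otimes>\<^sub>M lborel) (\<lambda>(x, y). (a \<bullet> x, b \<bullet> y))"
    by (rule pair_measure_distr[OF _ _ PY]) simp_all
  also have "distr (distr (dens_measure p \<Otimes>\<^sub>M dens_measure q) (lborel \<Otimes>\<^sub>M lborel) (\<lambda>(x, y). (a \<bullet> x, b \<bullet> y))) borel (\<lambda>(x, y). x + y)
     = distr (dens_measure p \<Otimes>\<^sub>M dens_measure q) borel ((\<lambda>(x, y). x + y) \<circ> (\<lambda>(x, y). (a \<bullet> x, b \<bullet> y)))"
    by (rule distr_distr) measurable
  also have "\<dots> = distr (dens_measure p \<Otimes>\<^sub>M dens_measure q) lborel (\<lambda>w. a \<bullet> fst w + b \<bullet> snd w)"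
    by (rule distr_cong) auto
  finally show ?thesis ..
qed

lemma sym_proj:
  fixes p :: "'a::euclidean_space \<Rightarrow> real"
  assumes p: "even_prob_density p"
  shows "distr (distr (dens_measure p) lborel (\<lambda>x. a \<bullet> x)) borel uminus = distr (dens_measure p) lborel (\<lambda>x. a \<bullet> x)"
proof -
  have [measurable]: "p \<in> borel_measurable borel" using epd_meas[OF p] .
  have ev: "(\<lambda>x. ennreal (p (- x))) = (\<lambda>x. ennreal (p x))" using epd_even[OF p] by simp
  have refl: "distr (dens_measure p) lborel uminus = dens_measure p"
    unfolding dens_measure_def by (subst reflect_density) (auto simp: ev)
  have "distr (distr (dens_measure p) lborel (\<lambda>x. a \<bullet> x)) borel uminus = distr (dens_measure p) borel (uminus \<circ> (\<lambda>x. a \<bullet> x))"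
    by (subst distr_distr) auto
  also have "\<dots> = distr (dens_measure p) lborel ((\<lambda>x. a \<bullet> x) \<circ> uminus)"
    by (rule distr_cong) auto
  also have "\<dots> = distr (distr (dens_measure p) lborel uminus) lborel (\<lambda>x. a \<bullet> x)"
    by (subst distr_distr) auto
  finally show ?thesis by (simp add: refl)
qed

lemma sym_abs_tail:
  fixes P :: "real measure"
  assumes P: "prob_space P" and sP: "sets P = sets borel" and sym: "distr P borel uminus = P" and s: "0 < s"
  shows "measure P {x. s \<le> \<bar>x\<bar>} = 2 * measure P {s..}"
proof -
  interpret P: prob_space P by fact
  have sp: "space P = UNIV" using sets_eq_imp_space_eq[OF sP] by simp
  have "{x. s \<le> \<bar>x\<bar>} = {s..} \<union> {..-s}" by auto
  moreover have "measure P ({s..} \<union> {..-s}) = measure P {s..} + measure P {..-s}"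
    using s sP by (intro P.finite_measure_Union) auto
  moreover have "measure P {..-s} = measure P {s..}"
  proof -
    have "measure P {s..} = measure (distr P borel uminus) {s..}" using sym by simp
    also have "\<dots> = measure P (uminus -` {s..} \<inter> space P)"
      by (rule measure_distr) (auto simp: measurable_cong_sets[OF sP refl] sP)
    also have "uminus -` {s..} \<inter> space P = {..-s}" by (auto simp: sp)
    finally show ?thesis ..
  qed
  ultimately show ?thesis by simp
qed

lemma dens_abs_eq:
  assumes k: "nice k" and s: "0 \<le> s"
  shows "measure (dens_measure k) {x. s < \<bar>x\<bar>} = measure (dens_measure k) {x. s \<le> \<bar>x\<bar>}"
proof -
  have [measurable]: "k \<in> borel_measurable borel" using nice_meas[OF k] .
  interpret K: prob_space "dens_measure k" using prob_density_prob_space[OF nice_pd[OF k]] .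
  have "{s, -s} \<in> null_sets lborel" by (rule finite_imp_null_set_lborel) simp
  then have N: "{s, -s} \<in> null_sets (dens_measure k)"
    using absolutely_continuousI_density[of "\<lambda>x. ennreal (k x)" lborel]
    unfolding absolutely_continuous_def dens_measure_def by auto
  have "{x. s \<le> \<bar>x\<bar>} = {x. s < \<bar>x\<bar>} \<union> {s, -s}" using s by auto
  then have "measure (dens_measure k) {x. s \<le> \<bar>x\<bar>} = measure (dens_measure k) ({x. s < \<bar>x\<bar>} \<union> {s, -s})" by simp
  also have "\<dots> = measure (dens_measure k) {x. s < \<bar>x\<bar>}"
    by (rule measure_Un_null_set) (use N in auto)
  finally show ?thesis ..
qed

lemma tails_hyp:
  fixes P :: "real measure"
  assumes P: "prob_space P" and sP: "sets P = sets borel" and sym: "distr P borel uminus = P"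
    and k: "nice k" and tl: "\<And>s. 0 < s \<Longrightarrow> measure P {s..} \<le> tail k s" and s: "0 \<le> s"
  shows "measure P {x. s \<le> \<bar>x\<bar>} \<le> measure (dens_measure k) {x. s \<le> \<bar>x\<bar>}"
    and "measure P {x. s < \<bar>x\<bar>} \<le> measure (dens_measure k) {x. s < \<bar>x\<bar>}"
proof -
  interpret P: prob_space P by fact
  have [measurable]: "k \<in> borel_measurable borel" using nice_meas[OF k] .
  interpret K: prob_space "dens_measure k" using prob_density_prob_space[OF nice_pd[OF k]] .
  have spP: "space P = UNIV" using sets_eq_imp_space_eq[OF sP] by simp
  have symK: "distr (dens_measure k) borel uminus = dens_measure k"
  proof -
    have ev: "(\<lambda>x. ennreal (k (- x))) = (\<lambda>x. ennreal (k x))" using nice_even[OF k] by simp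
    have "distr (dens_measure k) borel uminus = distr (dens_measure k) lborel uminus"
      by (rule distr_cong) auto
    also have "\<dots> = dens_measure k"
      unfolding dens_measure_def by (subst reflect_density) (auto simp: ev)
    finally show ?thesis .
  qed
  have le1: "measure P {x. s \<le> \<bar>x\<bar>} \<le> measure (dens_measure k) {x. s \<le> \<bar>x\<bar>}"
  proof (cases "s = 0")
    case True
    have "measure P {x. s \<le> \<bar>x\<bar>} = 1" using True P.prob_space by (simp add: spP)
    moreover have "measure (dens_measure k) {x. s \<le> \<bar>x\<bar>} = 1" using True K.prob_space by simp
    ultimately show ?thesis by simp
  next
    case False
    then have s0: "0 < s" using s by simp
    have "measure P {x. s \<le> \<bar>x\<bar>} = 2 * measure P {s..}" by (rule sym_abs_tail[OF P sP sym s0])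
    also have "\<dots> \<le> 2 * tail k s" using tl[OF s0] by simp
    also have "tail k s = measure (dens_measure k) {s..}" by (rule tail_eq_measure[OF nice_pd[OF k]])
    also have "2 * \<dots> = measure (dens_measure k) {x. s \<le> \<bar>x\<bar>}"
      using sym_abs_tail[OF K.prob_space_axioms _ symK s0] by simp
    finally show ?thesis .
  qed
  then show "measure P {x. s \<le> \<bar>x\<bar>} \<le> measure (dens_measure k) {x. s \<le> \<bar>x\<bar>}" .
  have "measure P {x. s < \<bar>x\<bar>} \<le> measure P {x. s \<le> \<bar>x\<bar>}"
    by (rule P.finite_measure_mono) (auto simp: sP)
  also note le1
  also have "measure (dens_measure k) {x. s \<le> \<bar>x\<bar>} = measure (dens_measure k) {x. s < \<bar>x\<bar>}"
    using dens_abs_eq[OF k s] by simp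
  finally show "measure P {x. s < \<bar>x\<bar>} \<le> measure (dens_measure k) {x. s < \<bar>x\<bar>}" .
qed


lemma tail_antimono:
  assumes "nice \<mu>" "s \<le> t"
  shows "tail \<mu> t \<le> tail \<mu> s"
proof -
  interpret K: prob_space "dens_measure \<mu>" using prob_density_prob_space[OF nice_pd[OF assms(1)]] .
  have "measure (dens_measure \<mu>) {t..} \<le> measure (dens_measure \<mu>) {s..}"
    using assms(2) by (intro K.finite_measure_mono) auto
  then show ?thesis using tail_eq_measure[OF nice_pd[OF assms(1)]] by simp
qed

lemma proj_tail:
  fixes p :: "real^'n \<Rightarrow> real"
  assumes p: "p \<in> subspherical \<mu>" and mu: "nice \<mu>" and a: "norm a \<le> 1"
    and s: "0 \<le> s" and cond: "a \<noteq> 0 \<or> 0 < s"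
  shows "measure (distr (dens_measure p) lborel (\<lambda>x. a \<bullet> x)) {s..} \<le> tail \<mu> s"
proof -
  have ep: "even_prob_density p" using p by (simp add: subspherical_def)
  interpret P: prob_space "dens_measure p" using epd_prob[OF ep] .
  have "measure (distr (dens_measure p) lborel (\<lambda>x. a \<bullet> x)) {s..} = measure (dens_measure p) ((\<lambda>x. a \<bullet> x) -` {s..} \<inter> space (dens_measure p))"
    by (rule measure_distr) auto
  also have "(\<lambda>x. a \<bullet> x) -` {s..} \<inter> space (dens_measure p) = {x. s \<le> a \<bullet> x}" by auto
  finally have eq: "measure (distr (dens_measure p) lborel (\<lambda>x. a \<bullet> x)) {s..} = measure (dens_measure p) {x. s \<le> a \<bullet> x}" .
  show ?thesis
  proof (cases "a = 0")
    case True
    then have "{x. s \<le> a \<bullet> x} = {}" using cond s by auto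
    then show ?thesis unfolding eq
      using tail_eq_measure[OF nice_pd[OF mu], of s] by simp
  next
    case False
    define e where "e = a /\<^sub>R norm a"
    have na: "0 < norm a" using False by simp
    have ne: "norm e = 1" using False by (simp add: e_def)
    have "{x. s \<le> a \<bullet> x} = {x. s / norm a \<le> e \<bullet> x}"
      using na by (auto simp: e_def field_simps)
    then have "measure (dens_measure p) {x. s \<le> a \<bullet> x} \<le> tail \<mu> (s / norm a)"
      using p ne s na by (auto simp: subspherical_def)
    also have "\<dots> \<le> tail \<mu> s"
    proof (rule tail_antimono[OF mu])
      show "s \<le> s / norm a" using s na a by (simp add: le_divide_eq mult_left_le)
    qed
    finally show ?thesis unfolding eq .
  qed
qed

lemma scale_nice:
  assumes f: "nice f" and c: "0 < c"
  shows "distr (dens_measure f) lborel (\<lambda>t. c * t) = dens_measure (\<lambda>t. f (t / c) / c)"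
    and "nice (\<lambda>t. f (t / c) / c)"
proof -
  have [measurable]: "f \<in> borel_measurable borel" using nice_meas[OF f] .
  interpret F: prob_space "dens_measure f" using prob_density_prob_space[OF nice_pd[OF f]] .
  show eq: "distr (dens_measure f) lborel (\<lambda>t. c * t) = dens_measure (\<lambda>t. f (t / c) / c)"
  proof (rule measure_eqI)
    fix A assume "A \<in> sets (distr (dens_measure f) lborel (\<lambda>t. c * t))"
    then have [measurable]: "A \<in> sets borel" by simp
    have [measurable]: "(\<lambda>t. c * t) -` A \<in> sets borel"
      using measurable_sets_borel[of "\<lambda>t. c * t" borel A] by simp
    have "emeasure (distr (dens_measure f) lborel (\<lambda>t. c * t)) A = emeasure (dens_measure f) ((\<lambda>t. c * t) -` A \<inter> space (dens_measure f))"
      by (rule emeasure_distr) auto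
    also have "\<dots> = (\<integral>\<^sup>+x. ennreal (f x) * indicator ((\<lambda>t. c * t) -` A \<inter> space (dens_measure f)) x \<partial>lborel)"
      unfolding dens_measure_def by (rule emeasure_density) (auto simp: dens_measure_def)
    also have "\<dots> = (\<integral>\<^sup>+x. ennreal (f x) * indicator A (c * x) \<partial>lborel)"
      by (intro nn_integral_cong) (simp add: indicator_def dens_measure_def)
    also have "\<dots> = (\<integral>\<^sup>+x. ennreal c * (ennreal (f ((0 + c * x) / c) / c) * indicator A (0 + c * x)) \<partial>lborel)"
    proof (intro nn_integral_cong)
      fix x
      have "ennreal c * ennreal (f x / c) = ennreal (f x)"
        using c nice_nonneg[OF f, of x] by (simp add: ennreal_mult[symmetric])
      then show "ennreal (f x) * indicator A (c * x) = ennreal c * (ennreal (f ((0 + c * x) / c) / c) * indicator A (0 + c * x))"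
        using c by (simp add: mult.assoc[symmetric])
    qed
    also have "\<dots> = ennreal c * (\<integral>\<^sup>+x. ennreal (f ((0 + c * x) / c) / c) * indicator A (0 + c * x) \<partial>lborel)"
      by (rule nn_integral_cmult) measurable
    also have "\<dots> = (\<integral>\<^sup>+t. ennreal (f (t / c) / c) * indicator A t \<partial>lborel)"
      using nn_integral_real_affine[of "\<lambda>t. ennreal (f (t / c) / c) * indicator A t" c 0] c by simp
    also have "\<dots> = emeasure (dens_measure (\<lambda>t. f (t / c) / c)) A"
      unfolding dens_measure_def by (rule emeasure_density[symmetric]) auto
    finally show "emeasure (distr (dens_measure f) lborel (\<lambda>t. c * t)) A = emeasure (dens_measure (\<lambda>t. f (t / c) / c)) A" .
  qed (simp add: dens_measure_def)
  have ps: "prob_space (dens_measure (\<lambda>t. f (t / c) / c))"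
    unfolding eq[symmetric] by (rule F.prob_space_distr) simp
  have pd: "prob_density (\<lambda>t. f (t / c) / c)"
    using ps c nice_nonneg[OF f] by (intro prob_densityI) (auto simp: dens_measure_def)
  have cf: "continuous_on UNIV f" using nice_cont[OF f] .
  have cont: "continuous_on {0..} (\<lambda>t. f (t / c) / c)"
    using c by (intro continuous_intros continuous_on_compose2[OF cf]) auto
  have mono: "f (t / c) / c \<le> f (s / c) / c" if "0 \<le> s" "s \<le> t" for s t
  proof -
    have "f (t / c) \<le> f (s / c)" using f that c unfolding nice_def by (simp add: divide_right_mono)
    then show ?thesis using c by (simp add: divide_right_mono)
  qed
  show "nice (\<lambda>t. f (t / c) / c)"
    unfolding nice_def even_prob_density_def
    using pd cont mono nice_even[OF f] by (auto simp: minus_divide_left[symmetric])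
qed

lemma proj_nice:
  fixes p :: "real^'n \<Rightarrow> real"
  assumes cm: "completely_monotone \<mu> Pn" and p: "p \<in> Pn" and a: "a \<noteq> 0"
  shows "\<exists>k. nice k \<and> distr (dens_measure p) lborel (\<lambda>x. a \<bullet> x) = dens_measure k"
proof -
  define e where "e = a /\<^sub>R norm a"
  have na: "0 < norm a" using a by simp
  have ne: "norm e = 1" using a by (simp add: e_def)
  obtain f where f: "nice f" and fe: "distr (dens_measure p) lborel (\<lambda>x. e \<bullet> x) = dens_measure f"
    using cm p ne unfolding completely_monotone_def by blast
  have "distr (dens_measure p) lborel (\<lambda>x. a \<bullet> x) = distr (dens_measure p) lborel ((\<lambda>t. norm a * t) \<circ> (\<lambda>x. e \<bullet> x))"
    using na by (intro distr_cong) (auto simp: e_def)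
  also have "\<dots> = distr (distr (dens_measure p) lborel (\<lambda>x. e \<bullet> x)) lborel (\<lambda>t. norm a * t)"
    by (subst distr_distr) auto
  also have "\<dots> = dens_measure (\<lambda>t. f (t / norm a) / norm a)"
    unfolding fe by (rule scale_nice(1)[OF f na])
  finally show ?thesis using scale_nice(2)[OF f na] by blast
qed

lemma proj_zero:
  assumes "even_prob_density p"
  shows "distr (dens_measure p) lborel (\<lambda>x. 0 \<bullet> x) = return lborel 0"
proof -
  interpret P: prob_space "dens_measure p" using epd_prob[OF assms] .
  show ?thesis by (simp add: P.distr_const)
qed

lemma conv_return:
  fixes M :: "real measure"
  assumes M: "finite_measure M" and sM: "sets M = sets borel"
  shows "(M \<star> return lborel 0) = M" and "(return lborel 0 \<star> M) = M"
proof -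
  have spM: "space M = UNIV" using sets_eq_imp_space_eq[OF sM] by simp
  have R: "finite_measure (return lborel (0::real))"
    by (intro prob_space.finite_measure prob_space_return) simp
  show one: "(M \<star> return lborel 0) = M"
  proof (rule measure_eqI)
    fix A assume "A \<in> sets (M \<star> return lborel 0)"
    then have [measurable]: "A \<in> sets borel" by simp
    have "emeasure (M \<star> return lborel 0) A = (\<integral>\<^sup>+x. emeasure (return lborel 0) {a. a + x \<in> A} \<partial>M)"
      by (rule convolution_emeasure) (simp_all add: M R sM spM)
    also have "\<dots> = (\<integral>\<^sup>+x. indicator A x \<partial>M)"
    proof (intro nn_integral_cong)
      fix x
      have "{a. a + x \<in> A} = (\<lambda>a. a + x) -` A \<inter> space borel" by auto
      then have "{a. a + x \<in> A} \<in> sets borel"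
        using measurable_sets_borel[of "\<lambda>a. a + x" borel A] by simp
      then show "emeasure (return lborel 0) {a. a + x \<in> A} = indicator A x"
        by (simp add: indicator_def)
    qed
    also have "\<dots> = emeasure M A" by (rule nn_integral_indicator) (simp add: sM)
    finally show "emeasure (M \<star> return lborel 0) A = emeasure M A" .
  qed (simp add: sM)
  show "(return lborel 0 \<star> M) = M"
    using convolution_commutative[OF M R] one sM by simp
qed


lemma nice_sym:
  assumes k: "nice k"
  shows "distr (dens_measure k) borel uminus = dens_measure k"
proof -
  have [measurable]: "k \<in> borel_measurable borel" using nice_meas[OF k] .
  have ev: "(\<lambda>x. ennreal (k (- x))) = (\<lambda>x. ennreal (k x))" using nice_even[OF k] by simp
  have "distr (dens_measure k) borel uminus = distr (dens_measure k) lborel uminus"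
    by (rule distr_cong) auto
  also have "\<dots> = dens_measure k"
    unfolding dens_measure_def by (subst reflect_density) (auto simp: ev)
  finally show ?thesis .
qed

lemma law_proj:
  fixes p :: "real^'n \<Rightarrow> real" and q :: "real^'m \<Rightarrow> real"
    and A :: "real^'n^'r" and B :: "real^'m^'r" and \<Theta> :: "real^'r^'r"
  assumes p: "even_prob_density p" and q: "even_prob_density q"
  shows "distr (law_xi \<Theta> A B p q) lborel (\<lambda>x. e \<bullet> x)
     = (distr (dens_measure p) lborel (\<lambda>x. (transpose A *v (transpose (matrix_inv \<Theta>) *v e)) \<bullet> x)
        \<star> distr (dens_measure q) lborel (\<lambda>y. (transpose B *v (transpose (matrix_inv \<Theta>) *v e)) \<bullet> y))"
proof -
  have Lm[measurable]: "Lmap \<Theta> A B \<in> borel_measurable borel"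
    by (intro borel_measurable_continuous_onI linear_continuous_on) (simp add: Lmap_linear linear_conv_bounded_linear[symmetric])
  have "distr (law_xi \<Theta> A B p q) lborel (\<lambda>x. e \<bullet> x)
      = distr (dens_measure p \<Otimes>\<^sub>M dens_measure q) lborel ((\<lambda>x. e \<bullet> x) \<circ> Lmap \<Theta> A B)"
    unfolding law_eq by (subst distr_distr) (auto simp: prod_density(1)[OF p q])
  also have "\<dots> = distr (dens_measure p \<Otimes>\<^sub>M dens_measure q) lborel
      (\<lambda>w. (transpose A *v (transpose (matrix_inv \<Theta>) *v e)) \<bullet> fst w + (transpose B *v (transpose (matrix_inv \<Theta>) *v e)) \<bullet> snd w)"
  proof (rule distr_cong)
    fix w :: "(real^'n) \<times> (real^'m)"
    show "((\<lambda>x. e \<bullet> x) \<circ> Lmap \<Theta> A B) w = (transpose A *v (transpose (matrix_inv \<Theta>) *v e)) \<bullet> fst w + (transpose B *v (transpose (matrix_inv \<Theta>) *v e)) \<bullet> snd w"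
      using e_Lmap[of e \<Theta> A B "fst w" "snd w"] by simp
  qed auto
  also have "\<dots> = (distr (dens_measure p) lborel (\<lambda>x. (transpose A *v (transpose (matrix_inv \<Theta>) *v e)) \<bullet> x)
        \<star> distr (dens_measure q) lborel (\<lambda>y. (transpose B *v (transpose (matrix_inv \<Theta>) *v e)) \<bullet> y))"
    by (rule split_sum[OF p q])
  finally show ?thesis .
qed


lemma law_sets: "sets (law_xi \<Theta> A B p q) = sets borel"
  by (simp add: law_xi_def)

lemma law_measure_proj:
  "measure (law_xi \<Theta> A B p q) {x. \<delta> \<le> e \<bullet> x} = measure (distr (law_xi \<Theta> A B p q) lborel (\<lambda>x. e \<bullet> x)) {\<delta>..}"
proof -
  have sp: "space (law_xi \<Theta> A B p q) = UNIV" by (simp add: law_xi_def)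
  have "measure (distr (law_xi \<Theta> A B p q) lborel (\<lambda>x. e \<bullet> x)) {\<delta>..}
      = measure (law_xi \<Theta> A B p q) ((\<lambda>x. e \<bullet> x) -` {\<delta>..} \<inter> space (law_xi \<Theta> A B p q))"
    by (rule measure_distr) (auto simp: law_xi_def)
  also have "(\<lambda>x. e \<bullet> x) -` {\<delta>..} \<inter> space (law_xi \<Theta> A B p q) = {x. \<delta> \<le> e \<bullet> x}"
    by (auto simp: sp)
  finally show ?thesis ..
qed

lemma proj_facts:
  fixes p :: "real^'n \<Rightarrow> real"
  assumes p: "even_prob_density p"
  shows "prob_space (distr (dens_measure p) lborel (\<lambda>x. a \<bullet> x))"
    and "sets (distr (dens_measure p) lborel (\<lambda>x. a \<bullet> x)) = sets borel"
    and "distr (distr (dens_measure p) lborel (\<lambda>x. a \<bullet> x)) borel uminus = distr (dens_measure p) lborel (\<lambda>x. a \<bullet> x)"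
    and "finite_measure (distr (dens_measure p) lborel (\<lambda>x. a \<bullet> x))"
proof -
  interpret P: prob_space "dens_measure p" using epd_prob[OF p] .
  show ps: "prob_space (distr (dens_measure p) lborel (\<lambda>x. a \<bullet> x))" by (rule P.prob_space_distr) simp
  show "sets (distr (dens_measure p) lborel (\<lambda>x. a \<bullet> x)) = sets borel" by simp
  show "distr (distr (dens_measure p) lborel (\<lambda>x. a \<bullet> x)) borel uminus = distr (dens_measure p) lborel (\<lambda>x. a \<bullet> x)"
    by (rule sym_proj[OF p])
  show "finite_measure (distr (dens_measure p) lborel (\<lambda>x. a \<bullet> x))"
    using ps by (rule prob_space.finite_measure)
qed

lemma dens_facts:
  assumes k: "nice k"
  shows "prob_space (dens_measure k)" "sets (dens_measure k) = sets borel" "finite_measure (dens_measure k)"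
  using prob_density_prob_space[OF nice_pd[OF k]] by (auto intro: prob_space.finite_measure)

lemma tail_bound:
  fixes \<mu> \<nu> :: "real \<Rightarrow> real"
    and p :: "real^'n \<Rightarrow> real" and q :: "real^'m \<Rightarrow> real"
    and A :: "real^'n^'r" and B :: "real^'m^'r" and \<Theta> :: "real^'r^'r"
  assumes mu: "nice \<mu>" and nu: "nice \<nu>"
    and p: "p \<in> subspherical \<mu>" and q: "q \<in> Pm" and cm: "completely_monotone \<nu> Pm"
    and pdT: "pd_mat \<Theta>"
    and psA: "psd_mat (\<Theta> ** \<Theta> - A ** transpose A)"
    and psB: "psd_mat (\<Theta> ** \<Theta> - B ** transpose B)"
    and pdS: "pd_mat (A ** transpose A + B ** transpose B)"
    and e: "norm e = 1" and d: "0 \<le> \<delta>"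
  shows "measure (law_xi \<Theta> A B p q) {x. \<delta> \<le> e \<bullet> x} \<le> tail (conv \<mu> \<nu>) \<delta>"
proof -
  have qs: "q \<in> subspherical \<nu>" using cm q by (auto simp: completely_monotone_def)
  have ep: "even_prob_density p" using p by (simp add: subspherical_def)
  have eq: "even_prob_density q" using qs by (simp add: subspherical_def)
  define a where "a = transpose A *v (transpose (matrix_inv \<Theta>) *v e)"
  define b where "b = transpose B *v (transpose (matrix_inv \<Theta>) *v e)"
  have na: "norm a \<le> 1" unfolding a_def by (rule coeff_norm_le[OF pdT psA e])
  have nb: "norm b \<le> 1" unfolding b_def by (rule coeff_norm_le[OF pdT psB e])
  have ab: "a \<noteq> 0 \<or> b \<noteq> 0" unfolding a_def b_def by (rule coeff_nonzero[OF pdT pdS e])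
  define PX where "PX = distr (dens_measure p) lborel (\<lambda>x. a \<bullet> x)"
  define PY where "PY = distr (dens_measure q) lborel (\<lambda>x. b \<bullet> x)"
  note X = proj_facts[OF ep, of a, folded PX_def]
  note Y = proj_facts[OF eq, of b, folded PY_def]
  note M = dens_facts[OF mu]
  note N = dens_facts[OF nu]
  have tX: "measure PX {s..} \<le> tail \<mu> s" if "0 < s" for s
    unfolding PX_def using that by (intro proj_tail[OF p mu na]) auto
  have tY: "measure PY {s..} \<le> tail \<nu> s" if "0 < s" for s
    unfolding PY_def using that by (intro proj_tail[OF qs nu nb]) auto
  have meq: "measure (law_xi \<Theta> A B p q) {x. \<delta> \<le> e \<bullet> x} = measure (PX \<star> PY) {\<delta>..}"
    unfolding law_measure_proj law_proj[OF ep eq] PX_def PY_def a_def b_def ..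
  have gam: "nice (conv \<mu> \<nu>)" by (rule conv_nice[OF mu nu])
  have last: "measure (PY \<star> dens_measure \<mu>) {\<delta>..} \<le> tail (conv \<mu> \<nu>) \<delta>"
  proof -
    have "measure (PY \<star> dens_measure \<mu>) {\<delta>..} \<le> measure (dens_measure \<nu> \<star> dens_measure \<mu>) {\<delta>..}"
    proof (rule comp_conv[OF Y(1) N(1) Y(2) N(2) Y(3) nice_sym[OF nu] _ _ mu d])
      fix s :: real assume "0 \<le> s"
      then show "measure PY {x. s < \<bar>x\<bar>} \<le> measure (dens_measure \<nu>) {x. s < \<bar>x\<bar>}"
        and "measure PY {x. s \<le> \<bar>x\<bar>} \<le> measure (dens_measure \<nu>) {x. s \<le> \<bar>x\<bar>}"
        using tails_hyp[OF Y(1) Y(2) Y(3) nu tY] by auto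
    qed
    also have "(dens_measure \<nu> \<star> dens_measure \<mu>) = (dens_measure \<mu> \<star> dens_measure \<nu>)"
      by (rule convolution_commutative) (simp_all add: M N)
    also have "\<dots> = dens_measure (conv \<mu> \<nu>)" by (rule conv_measure[OF mu nu])
    also have "measure (dens_measure (conv \<mu> \<nu>)) {\<delta>..} = tail (conv \<mu> \<nu>) \<delta>"
      by (rule tail_eq_measure[OF nice_pd[OF gam], symmetric])
    finally show ?thesis .
  qed
  show ?thesis
  proof (cases "b = 0")
    case False
    obtain kY where kY: "nice kY" and PYk: "PY = dens_measure kY"
      using proj_nice[OF cm q False] unfolding PY_def by blast
    note KY = dens_facts[OF kY]
    have "measure (PX \<star> dens_measure kY) {\<delta>..} \<le> measure (dens_measure \<mu> \<star> dens_measure kY) {\<delta>..}"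
    proof (rule comp_conv[OF X(1) M(1) X(2) M(2) X(3) nice_sym[OF mu] _ _ kY d])
      fix s :: real assume "0 \<le> s"
      then show "measure PX {x. s < \<bar>x\<bar>} \<le> measure (dens_measure \<mu>) {x. s < \<bar>x\<bar>}"
        and "measure PX {x. s \<le> \<bar>x\<bar>} \<le> measure (dens_measure \<mu>) {x. s \<le> \<bar>x\<bar>}"
        using tails_hyp[OF X(1) X(2) X(3) mu tX] by auto
    qed
    also have "(dens_measure \<mu> \<star> dens_measure kY) = (PY \<star> dens_measure \<mu>)"
      unfolding PYk by (rule convolution_commutative) (simp_all add: M KY)
    finally show ?thesis using meq last PYk by simp
  next
    case True
    then have a0: "a \<noteq> 0" using ab by simp
    have PY0: "PY = return lborel 0" unfolding PY_def True by (rule proj_zero[OF eq])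
    have "measure (PX \<star> PY) {\<delta>..} = measure PX {\<delta>..}"
      unfolding PY0 using conv_return(1)[OF X(4) X(2)] by simp
    also have "\<dots> \<le> tail \<mu> \<delta>" unfolding PX_def using a0 d by (intro proj_tail[OF p mu na]) auto
    also have "\<dots> = measure (dens_measure \<mu>) {\<delta>..}" by (rule tail_eq_measure[OF nice_pd[OF mu]])
    also have "\<dots> = measure (PY \<star> dens_measure \<mu>) {\<delta>..}"
      unfolding PY0 using conv_return(2)[OF M(3) M(2)] by simp
    also note last
    finally show ?thesis using meq by simp
  qed
qed


lemma law_density:
  fixes p :: "real^'n \<Rightarrow> real" and q :: "real^'m \<Rightarrow> real"
    and A :: "real^'n^'r" and B :: "real^'m^'r" and \<Theta> :: "real^'r^'r"
  assumes p: "even_prob_density p" and q: "even_prob_density q"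
    and pdT: "pd_mat \<Theta>" and pdS: "pd_mat (A ** transpose A + B ** transpose B)"
  shows "\<exists>g. even_prob_density g \<and> law_xi \<Theta> A B p q = dens_measure g"
proof -
  obtain g where "even_prob_density g"
      "distr (dens_measure (\<lambda>w. p (fst w) * q (snd w))) lborel (Lmap \<Theta> A B) = dens_measure g"
    using linear_image_density[OF prod_density(2)[OF p q] Lmap_linear Rmap_linear LR_id[OF pdT pdS]] by blast
  then show ?thesis unfolding law_eq prod_density(1)[OF p q] by blast
qed

lemma law_proj_density:
  fixes p :: "real^'n \<Rightarrow> real" and q :: "real^'m \<Rightarrow> real"
    and A :: "real^'n^'r" and B :: "real^'m^'r" and \<Theta> :: "real^'r^'r"
  assumes p: "even_prob_density p" and q: "even_prob_density q"
    and pdT: "pd_mat \<Theta>" and pdS: "pd_mat (A ** transpose A + B ** transpose B)" and e: "norm e = 1"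
  shows "\<exists>f. even_prob_density f \<and> distr (law_xi \<Theta> A B p q) lborel (\<lambda>x. e \<bullet> x) = dens_measure f"
proof -
  have Lm[measurable]: "Lmap \<Theta> A B \<in> borel_measurable borel"
    by (intro borel_measurable_continuous_onI linear_continuous_on) (simp add: Lmap_linear linear_conv_bounded_linear[symmetric])
  have lin: "linear (\<lambda>w. e \<bullet> Lmap \<Theta> A B w)"
    by (intro linearI) (simp_all add: linear_add[OF Lmap_linear] linear_scale[OF Lmap_linear] inner_add_right)
  have linR: "linear (\<lambda>t::real. Rmap \<Theta> A B (t *\<^sub>R e))"
    by (intro linearI) (simp_all add: linear_add[OF Rmap_linear] linear_scale[OF Rmap_linear] scaleR_add_left)
  have ee: "e \<bullet> e = 1" using e by (simp add: dot_square_norm)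
  have inv: "e \<bullet> Lmap \<Theta> A B (Rmap \<Theta> A B (t *\<^sub>R e)) = t" for t
    using LR_id[OF pdT pdS, of "t *\<^sub>R e"] ee by simp
  obtain f where f: "even_prob_density f"
      "distr (dens_measure (\<lambda>w. p (fst w) * q (snd w))) lborel (\<lambda>w. e \<bullet> Lmap \<Theta> A B w) = dens_measure f"
    using linear_image_density[OF prod_density(2)[OF p q] lin linR inv] by blast
  have "distr (law_xi \<Theta> A B p q) lborel (\<lambda>x. e \<bullet> x)
      = distr (dens_measure (\<lambda>w. p (fst w) * q (snd w))) lborel ((\<lambda>x. e \<bullet> x) \<circ> Lmap \<Theta> A B)"
    unfolding law_eq prod_density(1)[OF p q] by (subst distr_distr) auto
  then show ?thesis using f by (auto simp: o_def)
qed

lemma law_proj_nice: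
  fixes p :: "real^'n \<Rightarrow> real" and q :: "real^'m \<Rightarrow> real"
    and A :: "real^'n^'r" and B :: "real^'m^'r" and \<Theta> :: "real^'r^'r"
  assumes cmn: "completely_monotone \<mu> Pn" and cmm: "completely_monotone \<nu> Pm"
    and p: "p \<in> Pn" and q: "q \<in> Pm"
    and pdT: "pd_mat \<Theta>" and pdS: "pd_mat (A ** transpose A + B ** transpose B)" and e: "norm e = 1"
  shows "\<exists>f. nice f \<and> distr (law_xi \<Theta> A B p q) lborel (\<lambda>x. e \<bullet> x) = dens_measure f"
proof -
  have ep: "even_prob_density p" using cmn p by (auto simp: completely_monotone_def subspherical_def)
  have eq: "even_prob_density q" using cmm q by (auto simp: completely_monotone_def subspherical_def)
  define a where "a = transpose A *v (transpose (matrix_inv \<Theta>) *v e)"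
  define b where "b = transpose B *v (transpose (matrix_inv \<Theta>) *v e)"
  have ab: "a \<noteq> 0 \<or> b \<noteq> 0" unfolding a_def b_def by (rule coeff_nonzero[OF pdT pdS e])
  define PX where "PX = distr (dens_measure p) lborel (\<lambda>x. a \<bullet> x)"
  define PY where "PY = distr (dens_measure q) lborel (\<lambda>x. b \<bullet> x)"
  note X = proj_facts[OF ep, of a, folded PX_def]
  note Y = proj_facts[OF eq, of b, folded PY_def]
  have leq: "distr (law_xi \<Theta> A B p q) lborel (\<lambda>x. e \<bullet> x) = (PX \<star> PY)"
    unfolding law_proj[OF ep eq] PX_def PY_def a_def b_def ..
  show ?thesis
  proof (cases "a = 0")
    case True
    then have b0: "b \<noteq> 0" using ab by simp
    obtain kY where kY: "nice kY" and PYk: "PY = dens_measure kY"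
      using proj_nice[OF cmm q b0] unfolding PY_def by blast
    have PX0: "PX = return lborel 0" unfolding PX_def True by (rule proj_zero[OF ep])
    have "(PX \<star> PY) = PY" unfolding PX0 by (rule conv_return(2)[OF Y(4) Y(2)])
    then show ?thesis using leq PYk kY by auto
  next
    case False
    obtain kX where kX: "nice kX" and PXk: "PX = dens_measure kX"
      using proj_nice[OF cmn p False] unfolding PX_def by blast
    show ?thesis
    proof (cases "b = 0")
      case True
      have PY0: "PY = return lborel 0" unfolding PY_def True by (rule proj_zero[OF eq])
      have "(PX \<star> PY) = PX" unfolding PY0 by (rule conv_return(1)[OF X(4) X(2)])
      then show ?thesis using leq PXk kX by auto
    next
      case False
      obtain kY where kY: "nice kY" and PYk: "PY = dens_measure kY"
        using proj_nice[OF cmm q False] unfolding PY_def by blast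
      have "(PX \<star> PY) = dens_measure (conv kX kY)" unfolding PXk PYk by (rule conv_measure[OF kX kY])
      then show ?thesis using leq conv_nice[OF kX kY] by auto
    qed
  qed
qed

theorem proposition2p4:
  fixes \<mu> \<nu> :: "real \<Rightarrow> real"
    and Pn :: "(real^'n \<Rightarrow> real) set" and Pm :: "(real^'m \<Rightarrow> real) set"
    and A :: "real^'n^'r" and B :: "real^'m^'r" and \<Theta> :: "real^'r^'r"
    and \<gamma> :: "real \<Rightarrow> real"
  assumes "nice \<mu>" and "nice \<nu>"
    and "Pn \<subseteq> subspherical \<mu>"
    and "completely_monotone \<nu> Pm"
    and "pd_mat \<Theta>"
    and "psd_mat (\<Theta> ** \<Theta> - A ** transpose A)"
    and "psd_mat (\<Theta> ** \<Theta> - B ** transpose B)"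
    and "pd_mat (A ** transpose A + B ** transpose B)"
    and "\<gamma> = (\<lambda>s. LINT t|lborel. \<mu> (s - t) * \<nu> t)"
  shows "nice \<gamma> \<and>
    (\<forall>p\<in>Pn. \<forall>q\<in>Pm.
       (\<forall>(e::real^'r) \<delta>. norm e = 1 \<longrightarrow> 0 \<le> \<delta> \<longrightarrow>
          measure (law_xi \<Theta> A B p q) {x. e \<bullet> x \<ge> \<delta>} \<le> tail \<gamma> \<delta>)
     \<and> (\<forall>e::real^'r. norm e = 1 \<longrightarrow>
          (\<exists>f. even_prob_density f \<and>
               distr (law_xi \<Theta> A B p q) lborel (\<lambda>x. e \<bullet> x) = dens_measure f))
     \<and> (\<exists>g\<in>subspherical \<gamma>. law_xi \<Theta> A B p q = dens_measure g))
    \<and> (completely_monotone \<mu> Pn \<longrightarrow>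
        completely_monotone \<gamma>
          {g \<in> subspherical \<gamma>. \<exists>p\<in>Pn. \<exists>q\<in>Pm. law_xi \<Theta> A B p q = dens_measure g})"
proof -
  note mu = assms(1) and nu = assms(2) and Pn = assms(3) and cm = assms(4) and pdT = assms(5)
    and psA = assms(6) and psB = assms(7) and pdS = assms(8)
  have gdef: "\<gamma> = conv \<mu> \<nu>" using assms(9) by (simp add: conv_def fun_eq_iff)
  have gam: "nice \<gamma>" unfolding gdef by (rule conv_nice[OF mu nu])
  have TB: "measure (law_xi \<Theta> A B p q) {x. e \<bullet> x \<ge> \<delta>} \<le> tail \<gamma> \<delta>"
    if p: "p \<in> Pn" and q: "q \<in> Pm" and e: "norm e = 1" and d: "0 \<le> \<delta>" for p q e \<delta>
    unfolding gdef using tail_bound[OF mu nu _ q cm pdT psA psB pdS e d] Pn p by auto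
  have part1: "(\<forall>(e::real^'r) \<delta>. norm e = 1 \<longrightarrow> 0 \<le> \<delta> \<longrightarrow>
          measure (law_xi \<Theta> A B p q) {x. e \<bullet> x \<ge> \<delta>} \<le> tail \<gamma> \<delta>)
     \<and> (\<forall>e::real^'r. norm e = 1 \<longrightarrow>
          (\<exists>f. even_prob_density f \<and>
               distr (law_xi \<Theta> A B p q) lborel (\<lambda>x. e \<bullet> x) = dens_measure f))
     \<and> (\<exists>g\<in>subspherical \<gamma>. law_xi \<Theta> A B p q = dens_measure g)"
    if p: "p \<in> Pn" and q: "q \<in> Pm" for p q
  proof (intro conjI allI impI)
    have ep: "even_prob_density p" using Pn p by (auto simp: subspherical_def)
    have eq: "even_prob_density q" using cm q by (auto simp: completely_monotone_def subspherical_def)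
    show "measure (law_xi \<Theta> A B p q) {x. e \<bullet> x \<ge> \<delta>} \<le> tail \<gamma> \<delta>"
      if "norm e = 1" "0 \<le> \<delta>" for e :: "real^'r" and \<delta> using TB[OF p q that] .
    show "\<exists>f. even_prob_density f \<and> distr (law_xi \<Theta> A B p q) lborel (\<lambda>x. e \<bullet> x) = dens_measure f"
      if "norm e = 1" for e :: "real^'r" by (rule law_proj_density[OF ep eq pdT pdS that])
    obtain g where g: "even_prob_density g" "law_xi \<Theta> A B p q = dens_measure g"
      using law_density[OF ep eq pdT pdS] by blast
    have "g \<in> subspherical \<gamma>"
      unfolding subspherical_def using g TB[OF p q] by auto
    then show "\<exists>g\<in>subspherical \<gamma>. law_xi \<Theta> A B p q = dens_measure g" using g by blast
  qed
  have part2: "completely_monotone \<gamma>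
          {g \<in> subspherical \<gamma>. \<exists>p\<in>Pn. \<exists>q\<in>Pm. law_xi \<Theta> A B p q = dens_measure g}"
    if cmn: "completely_monotone \<mu> Pn"
    unfolding completely_monotone_def
  proof (intro conjI ballI allI impI)
    show "nice \<gamma>" by (rule gam)
    show "{g \<in> subspherical \<gamma>. \<exists>p\<in>Pn. \<exists>q\<in>Pm. law_xi \<Theta> A B p q = dens_measure g} \<subseteq> subspherical \<gamma>" by auto
    fix g and e :: "real^'r"
    assume g: "g \<in> {g \<in> subspherical \<gamma>. \<exists>p\<in>Pn. \<exists>q\<in>Pm. law_xi \<Theta> A B p q = dens_measure g}" and e: "norm e = 1"
    then obtain p q where p: "p \<in> Pn" and q: "q \<in> Pm" and lg: "law_xi \<Theta> A B p q = dens_measure g" by auto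
    show "\<exists>f. nice f \<and> distr (dens_measure g) lborel (\<lambda>x. e \<bullet> x) = dens_measure f"
      using law_proj_nice[OF cmn cm p q pdT pdS e] lg by simp
  qed
  show ?thesis using gam part1 part2 by blast
qed


end
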